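(* Let $1\le p<\infty$ and let $v=(v_n)_{n\in\mathbb{Z}}$ be a sequence of positive numbers with $\sup_{n\in\mathbb{Z}}v_{n+1}/v_n<\infty$, so that the forward shift $F(x_n)_{n\in\mathbb{Z}}=(x_{n-1})_{n\in\mathbb{Z}}$ is a bounded operator on $\ell^p(\mathbb{Z},v)$. Then $F$ is distributionally chaotic if and only if it is densely distributionally chaotic. Moreover, if there exist finite nonempty subsets $S_k\subset\mathbb{Z}$ ($k\in\mathbb{N}$) such that (i) there exists $A\subseteq\mathbb{N}$ with $\overline{\mathrm{dens}}(A)=1$ such that $\lim_{n\in A}v_n=0$, and (ii) there exist $\varepsilon>0$ and an increasing sequence $(N_k)$ in $\mathbb{N}$ such that for every $k\in\mathbb{N}$ \[\operatorname{card}\Big\{1\le n\le N_k:\ \frac{\sum_{j\in S_k}v_{n+j}}{\sum_{j\in S_k}v_j}\ge k\Big\}\ge N_k\varepsilon,\] then $F$ is (densely) distributionally chaotic.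
   Context: $\ell^p(\mathbb{Z},v)=\{(x_n)_{n\in\mathbb{Z}}:\sum_{n}|x_n|^pv_n<\infty\}$ with norm $(\sum_n|x_n|^pv_n)^{1/p}$. For $A\subseteq\mathbb{N}$, $\overline{\mathrm{dens}}(A)=\limsup_{N}\frac{\operatorname{card}(A\cap[1,N])}{N}$, $\underline{\mathrm{dens}}(A)=\liminf_{N}\frac{\operatorname{card}(A\cap[1,N])}{N}$. An operator $T$ on a Banach space $Y$ is distributionally chaotic if there exist an uncountable $\Gamma\subset Y$ and $\varepsilon>0$ such that for every $\delta>0$ and distinct $x,y\in\Gamma$: $\underline{\mathrm{dens}}\{j:\|T^jx-T^jy\|<\varepsilon\}=0$ and $\overline{\mathrm{dens}}\{j:\|T^jx-T^jy\|<\delta\}=1$; densely distributionally chaotic if $\Gamma$ can be chosen dense. *)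

theory Defs
  imports "HOL-Analysis.Analysis" "HOL-Library.Liminf_Limsup"
begin

definition lpw :: "real \<Rightarrow> (int \<Rightarrow> real) \<Rightarrow> (int \<Rightarrow> real) set" where
  "lpw p v = {x. (\<lambda>n. \<bar>x n\<bar> powr p * v n) summable_on UNIV}"

definition lpw_norm :: "real \<Rightarrow> (int \<Rightarrow> real) \<Rightarrow> (int \<Rightarrow> real) \<Rightarrow> real" where
  "lpw_norm p v x = (\<Sum>\<^sub>\<infinity>n. \<bar>x n\<bar> powr p * v n) powr (1 / p)"

definition fwd_shift :: "(int \<Rightarrow> real) \<Rightarrow> (int \<Rightarrow> real)" where
  "fwd_shift x = (\<lambda>n. x (n - 1))"

definition upper_dens :: "nat set \<Rightarrow> ereal" where
  "upper_dens A = limsup (\<lambda>N. ereal (real (card (A \<inter> {1..N})) / real N))"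

definition lower_dens :: "nat set \<Rightarrow> ereal" where
  "lower_dens A = liminf (\<lambda>N. ereal (real (card (A \<inter> {1..N})) / real N))"

definition dc_scrambled ::
  "'a set \<Rightarrow> ('a \<Rightarrow> 'a \<Rightarrow> real) \<Rightarrow> ('a \<Rightarrow> 'a) \<Rightarrow> 'a set \<Rightarrow> bool" where
  "dc_scrambled X dst T \<Gamma> \<longleftrightarrow> \<Gamma> \<subseteq> X \<and> uncountable \<Gamma> \<and>
     (\<exists>\<epsilon>>0. \<forall>\<delta>>0. \<forall>x\<in>\<Gamma>. \<forall>y\<in>\<Gamma>. x \<noteq> y \<longrightarrow>
        lower_dens {j. dst ((T ^^ j) x) ((T ^^ j) y) < \<epsilon>} = 0 \<and>
        upper_dens {j. dst ((T ^^ j) x) ((T ^^ j) y) < \<delta>} = 1)"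

definition distr_chaotic ::
  "'a set \<Rightarrow> ('a \<Rightarrow> 'a \<Rightarrow> real) \<Rightarrow> ('a \<Rightarrow> 'a) \<Rightarrow> bool" where
  "distr_chaotic X dst T \<longleftrightarrow> (\<exists>\<Gamma>. dc_scrambled X dst T \<Gamma>)"

definition dense_distr_chaotic ::
  "'a set \<Rightarrow> ('a \<Rightarrow> 'a \<Rightarrow> real) \<Rightarrow> ('a \<Rightarrow> 'a) \<Rightarrow> bool" where
  "dense_distr_chaotic X dst T \<longleftrightarrow> (\<exists>\<Gamma>. dc_scrambled X dst T \<Gamma> \<and>
      (\<forall>x\<in>X. \<forall>e>0. \<exists>y\<in>\<Gamma>. dst x y < e))"

definition lpw_dist :: "real \<Rightarrow> (int \<Rightarrow> real) \<Rightarrow> (int \<Rightarrow> real) \<Rightarrow> (int \<Rightarrow> real) \<Rightarrow> real" where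
  "lpw_dist p v x y = lpw_norm p v (\<lambda>n. x n - y n)"

end

theory Submission
  imports Defs
begin

definition UD1 :: "nat set \<Rightarrow> bool" where
  "UD1 A \<longleftrightarrow> (\<forall>\<theta>>0. \<forall>M. \<exists>N\<ge>M. N > 0 \<and> real (card (A \<inter> {1..N})) \<ge> (1 - \<theta>) * real N)"

definition LD0 :: "nat set \<Rightarrow> bool" where
  "LD0 A \<longleftrightarrow> (\<forall>\<theta>>0. \<forall>M. \<exists>N\<ge>M. N > 0 \<and> real (card (A \<inter> {1..N})) \<le> \<theta> * real N)"

lemma card_le_N: "card (A \<inter> {1..N}) \<le> N"
proof -
  have "card (A \<inter> {1..N}) \<le> card {1..N}" by (intro card_mono) auto
  thus ?thesis by simp
qed

lemma ratio_le1: "real (card (A \<inter> {1..N})) / real N \<le> 1"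
  using card_le_N[of A N] by (cases "N = 0") (auto simp: divide_simps)

lemma upper_dens_UD1: "upper_dens A = 1 \<longleftrightarrow> UD1 A"
proof
  let ?r = "\<lambda>N. ereal (real (card (A \<inter> {1..N})) / real N)"
  assume h: "upper_dens A = 1"
  show "UD1 A" unfolding UD1_def
  proof (intro allI impI)
    fix \<theta> :: real and M :: nat assume th: "\<theta> > 0"
    show "\<exists>N\<ge>M. N > 0 \<and> real (card (A \<inter> {1..N})) \<ge> (1 - \<theta>) * real N"
    proof (rule ccontr)
      assume "\<not> ?thesis"
      hence b: "\<forall>N\<ge>max M 1. real (card (A \<inter> {1..N})) < (1 - \<theta>) * real N" by force
      have "eventually (\<lambda>N. ?r N \<le> ereal (1 - \<theta>)) sequentially"
        unfolding eventually_sequentially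
      proof (intro exI[of _ "max M 1"] allI impI)
        fix N assume "N \<ge> max M 1"
        with b have "real (card (A \<inter> {1..N})) < (1 - \<theta>) * real N" by auto
        moreover have "real N > 0" using \<open>N \<ge> max M 1\<close> by auto
        ultimately show "?r N \<le> ereal (1 - \<theta>)" by (simp add: divide_simps)
      qed
      hence "limsup ?r \<le> ereal (1 - \<theta>)" by (intro Limsup_bounded) auto
      with h th show False unfolding upper_dens_def by simp
    qed
  qed
next
  let ?r = "\<lambda>N. ereal (real (card (A \<inter> {1..N})) / real N)"
  assume h: "UD1 A"
  have "\<forall>N. ?r N \<le> 1" using ratio_le1[of A] by simp
  hence le: "limsup ?r \<le> 1"
    by (intro Limsup_bounded always_eventually) auto
  have ge: "limsup ?r \<ge> 1"
  proof (rule ccontr)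
    assume "\<not> limsup ?r \<ge> 1"
    hence lt: "limsup ?r < 1" by simp
    then obtain y where y0: "limsup ?r < ereal y" "ereal y < 1"
      using ereal_dense2 by blast
    hence y: "limsup ?r < ereal y" "y < 1" by auto
    have "eventually (\<lambda>N. ?r N < ereal y) sequentially"
      using y(1) Limsup_le_iff[where C="limsup ?r" and F=sequentially and X="?r"] by auto
    then obtain M where M: "\<forall>N\<ge>M. ?r N < ereal y" unfolding eventually_sequentially by auto
    obtain N where N: "N \<ge> M" "N > 0" "real (card (A \<inter> {1..N})) \<ge> (1 - (1 - y)) * real N"
      using h y(2) unfolding UD1_def by (meson diff_gt_0_iff_gt)
    from M N(1) have "real (card (A \<inter> {1..N})) / real N < y" by auto
    with N(2,3) show False by (simp add: divide_simps)
  qed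
  from le ge show "upper_dens A = 1" unfolding upper_dens_def by simp
qed

lemma lower_dens_LD0: "lower_dens A = 0 \<longleftrightarrow> LD0 A"
proof
  let ?r = "\<lambda>N. ereal (real (card (A \<inter> {1..N})) / real N)"
  assume h: "lower_dens A = 0"
  show "LD0 A" unfolding LD0_def
  proof (intro allI impI)
    fix \<theta> :: real and M :: nat assume th: "\<theta> > 0"
    show "\<exists>N\<ge>M. N > 0 \<and> real (card (A \<inter> {1..N})) \<le> \<theta> * real N"
    proof (rule ccontr)
      assume "\<not> ?thesis"
      hence b: "\<forall>N\<ge>max M 1. real (card (A \<inter> {1..N})) > \<theta> * real N" by force
      have "eventually (\<lambda>N. ?r N \<ge> ereal \<theta>) sequentially"
        unfolding eventually_sequentially
      proof (intro exI[of _ "max M 1"] allI impI)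
        fix N assume "N \<ge> max M 1"
        with b have "real (card (A \<inter> {1..N})) > \<theta> * real N" by auto
        moreover have "real N > 0" using \<open>N \<ge> max M 1\<close> by auto
        ultimately show "?r N \<ge> ereal \<theta>" by (simp add: divide_simps)
      qed
      hence "liminf ?r \<ge> ereal \<theta>" by (intro Liminf_bounded) auto
      with h th show False unfolding lower_dens_def by simp
    qed
  qed
next
  let ?r = "\<lambda>N. ereal (real (card (A \<inter> {1..N})) / real N)"
  assume h: "LD0 A"
  have ge: "liminf ?r \<ge> 0"
    by (intro Liminf_bounded) auto
  have le: "liminf ?r \<le> 0"
  proof (rule ccontr)
    assume "\<not> liminf ?r \<le> 0"
    hence lt: "liminf ?r > 0" by simp
    then obtain y where y0: "0 < ereal y" "ereal y < liminf ?r"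
      using ereal_dense2 by blast
    hence y: "ereal y < liminf ?r" "y > 0" by auto
    have "eventually (\<lambda>N. ereal y < ?r N) sequentially"
      using y(1) le_Liminf_iff[where C="liminf ?r" and F=sequentially and X="?r"] by auto
    then obtain M where M: "\<forall>N\<ge>M. ereal y < ?r N" unfolding eventually_sequentially by auto
    obtain N where N: "N \<ge> M" "N > 0" "real (card (A \<inter> {1..N})) \<le> (y/2) * real N"
      using h y(2) unfolding LD0_def by (meson half_gt_zero)
    from M N(1) have "y < real (card (A \<inter> {1..N})) / real N" by auto
    with N(2,3) y(2) show False by (simp add: divide_simps)
  qed
  from le ge show "lower_dens A = 0" unfolding lower_dens_def by simp
qed

lemma card_split_N: "card (A \<inter> {1..N}) + card (B \<inter> {1..N}) \<ge> N" if "\<And>j. j \<in> {1..N} \<Longrightarrow> j \<in> A \<or> j \<in> B"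
proof -
  have "{1..N} \<subseteq> (A \<inter> {1..N}) \<union> (B \<inter> {1..N})" using that by fastforce
  hence "card {1..N} \<le> card ((A \<inter> {1..N}) \<union> (B \<inter> {1..N}))" by (intro card_mono) auto
  also have "\<dots> \<le> card (A \<inter> {1..N}) + card (B \<inter> {1..N})" by (rule card_Un_le)
  finally show ?thesis by simp
qed

lemma card_disj_N: "card (A \<inter> {1..N}) + card (B \<inter> {1..N}) \<le> N" if "A \<inter> B = {}"
proof -
  have "card (A \<inter> {1..N}) + card (B \<inter> {1..N}) = card ((A \<inter> {1..N}) \<union> (B \<inter> {1..N}))"
    using that by (intro card_Un_disjoint[symmetric]) auto
  also have "\<dots> \<le> card {1..N}" by (intro card_mono) auto
  finally show ?thesis by simp
qed

lemma LD0_from_disjoint: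
  assumes "A \<inter> B = {}"
    and "\<And>\<theta> M. \<theta> > 0 \<Longrightarrow> \<exists>N\<ge>M. N > 0 \<and> real (card (B \<inter> {1..N})) \<ge> (1 - \<theta>) * real N"
  shows "LD0 A"
  unfolding LD0_def
proof (intro allI impI)
  fix \<theta> :: real and M :: nat assume "\<theta> > 0"
  then obtain N where N: "N \<ge> M" "N > 0" "real (card (B \<inter> {1..N})) \<ge> (1 - \<theta>) * real N"
    using assms(2) by blast
  have "card (A \<inter> {1..N}) + card (B \<inter> {1..N}) \<le> N" using card_disj_N[OF assms(1)] .
  hence "real (card (A \<inter> {1..N})) \<le> \<theta> * real N" using N(3) by (simp add: algebra_simps)
  thus "\<exists>N\<ge>M. N > 0 \<and> real (card (A \<inter> {1..N})) \<le> \<theta> * real N" using N by blast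
qed

lemma UD1_transfer:
  assumes "UD1 A" and "\<And>j. j \<in> A \<Longrightarrow> j \<ge> n0 \<Longrightarrow> j + s \<in> B"
  shows "UD1 B"
  unfolding UD1_def
proof (intro allI impI)
  fix \<theta> :: real and M :: nat assume th: "\<theta> > 0"
  obtain N where N: "N \<ge> M + nat \<lceil>2 * real (n0 + s) / \<theta>\<rceil>" "N > 0"
      "real (card (A \<inter> {1..N})) \<ge> (1 - \<theta>/2) * real N"
    using assms(1) th unfolding UD1_def by (meson half_gt_zero)
  have Nb: "real N * \<theta> \<ge> 2 * real (n0 + s)"
  proof -
    have "real N \<ge> 2 * real (n0 + s) / \<theta>" using N(1) by linarith
    thus ?thesis using th by (simp add: divide_simps)
  qed
  let ?A1 = "A \<inter> {1..N} \<inter> {n0..}"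
  have "A \<inter> {1..N} \<subseteq> ?A1 \<union> {..<n0}" by auto
  hence "card (A \<inter> {1..N}) \<le> card (?A1 \<union> {..<n0})" by (intro card_mono) auto
  also have "\<dots> \<le> card ?A1 + card {..<n0}" by (rule card_Un_le)
  finally have c1: "card (A \<inter> {1..N}) \<le> card ?A1 + n0" by simp
  have "card ?A1 = card ((\<lambda>j. j + s) ` ?A1)" by (intro card_image[symmetric]) (auto simp: inj_on_def)
  also have "\<dots> \<le> card (B \<inter> {1..N+s})"
    by (intro card_mono) (auto intro: assms(2))
  finally have c2: "card (A \<inter> {1..N}) \<le> card (B \<inter> {1..N+s}) + n0" using c1 by linarith
  have "\<theta> * real s \<ge> 0" using th by simp
  hence "(1 - \<theta>) * real (N + s) \<le> (1 - \<theta>/2) * real N - real n0"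
    using Nb th by (simp add: algebra_simps) (use \<open>\<theta> * real s \<ge> 0\<close> in linarith)
  also have "\<dots> \<le> real (card (B \<inter> {1..N+s}))" using N(3) c2 by linarith
  finally show "\<exists>N'\<ge>M. N' > 0 \<and> real (card (B \<inter> {1..N'})) \<ge> (1 - \<theta>) * real N'"
    using N by (intro exI[of _ "N+s"]) auto
qed

lemma UD1_mono: "UD1 A \<Longrightarrow> A \<subseteq> B \<Longrightarrow> UD1 B"
  using UD1_transfer[of A 0 0 B] by auto

lemma card_interval_split:
  "card {j\<in>{1..a+b}. P j} = card {j\<in>{1..a}. P j} + card {j\<in>{1..b::nat}. P (a+j)}"
proof -
  have e: "{j\<in>{1..a+b}. P j} = {j\<in>{1..a}. P j} \<union> (\<lambda>j. a + j) ` {j\<in>{1..b}. P (a+j)}"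
  proof (intro set_eqI iffI)
    fix x assume "x \<in> {j\<in>{1..a+b}. P j}"
    thus "x \<in> {j\<in>{1..a}. P j} \<union> (\<lambda>j. a + j) ` {j\<in>{1..b}. P (a+j)}"
    proof (cases "x \<le> a")
      case False
      hence "x = a + (x - a)" "x - a \<in> {j\<in>{1..b}. P (a+j)}" using \<open>x \<in> _\<close> by auto
      thus ?thesis by blast
    qed simp
  qed auto
  have "card {j\<in>{1..a+b}. P j} = card {j\<in>{1..a}. P j} + card ((\<lambda>j. a + j) ` {j\<in>{1..b}. P (a+j)})"
    unfolding e by (intro card_Un_disjoint) auto
  also have "card ((\<lambda>j. a + j) ` {j\<in>{1..b}. P (a+j)}) = card {j\<in>{1..b}. P (a+j)}"
    by (intro card_image) (auto simp: inj_on_def)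
  finally show ?thesis .
qed

lemma runs_lemma:
  fixes f :: "nat \<Rightarrow> real" and t T2 C \<theta> :: real and M N :: nat
  assumes f0: "f 0 \<le> t" and step: "\<And>j. f (Suc j) \<le> C * f j" and C0: "C \<ge> 0"
    and CT: "C * t < T2" and tT: "t \<le> T2" and M1: "M \<ge> 1" and th: "\<theta> > 0"
    and count: "real (card {j\<in>{1..N}. f j > T2}) > (real M + 1/\<theta>) * real (card {j\<in>{1..N}. t < f j \<and> f j \<le> T2})"
  shows "\<exists>s ln. f s \<le> t \<and> ln \<ge> M \<and> s + ln \<le> N \<and> (\<forall>j\<in>{1..ln}. f (s+j) > t) \<and>
            real (card {j\<in>{1..ln}. f (s+j) \<le> T2}) \<le> \<theta> * real ln"
  using count
proof (induction N rule: less_induct)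
  case (less N)
  let ?c = "real M + 1/\<theta>"
  define s0 where "s0 = Max {s\<in>{0..N}. f s \<le> t}"
  have fin: "finite {s\<in>{0..N}. f s \<le> t}" by simp
  have ne: "0 \<in> {s\<in>{0..N}. f s \<le> t}" using f0 by simp
  have s0in: "s0 \<in> {s\<in>{0..N}. f s \<le> t}" unfolding s0_def using fin ne by (intro Max_in) auto
  have s0max: "\<And>s. s \<le> N \<Longrightarrow> f s \<le> t \<Longrightarrow> s \<le> s0" unfolding s0_def using fin by (intro Max_ge) auto
  show ?case
  proof (cases "s0 = N")
    case True
    show ?thesis
    proof (cases N)
      case 0
      then show ?thesis using less.prems by simp
    next
      case (Suc N')
      have fN: "f N \<le> t" using s0in True by simp
      have "{j\<in>{1..N}. f j > T2} = {j\<in>{1..N'}. f j > T2}"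
        using fN tT Suc by (auto simp: le_Suc_eq)
      moreover have "{j\<in>{1..N}. t < f j \<and> f j \<le> T2} = {j\<in>{1..N'}. t < f j \<and> f j \<le> T2}"
        using fN Suc by (auto simp: le_Suc_eq)
      ultimately have "real (card {j\<in>{1..N'}. f j > T2}) > ?c * real (card {j\<in>{1..N'}. t < f j \<and> f j \<le> T2})"
        using less.prems by simp
      from less.IH[OF _ this] Suc obtain s ln where "f s \<le> t \<and> ln \<ge> M \<and> s + ln \<le> N' \<and> (\<forall>j\<in>{1..ln}. f (s+j) > t) \<and>
            real (card {j\<in>{1..ln}. f (s+j) \<le> T2}) \<le> \<theta> * real ln" by auto
      then show ?thesis using Suc by (intro exI[of _ s] exI[of _ ln]) auto
    qed
  next
    case False
    hence s0N: "s0 < N" using s0in by auto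
    define ln where "ln = N - s0"
    have Nsplit: "N = s0 + ln" using s0N unfolding ln_def by simp
    have run: "\<forall>j\<in>{1..ln}. f (s0+j) > t"
    proof
      fix j assume "j \<in> {1..ln}"
      hence "s0 + j \<le> N" "\<not> s0 + j \<le> s0" using Nsplit by auto
      thus "f (s0+j) > t" using s0max[of "s0+j"] by force
    qed
    have fs0: "f s0 \<le> t" using s0in by simp
    let ?br = "card {j\<in>{1..ln}. f (s0+j) \<le> T2}"
    show ?thesis
    proof (cases "ln \<ge> M \<and> real ?br \<le> \<theta> * real ln")
      case True
      then show ?thesis using fs0 run Nsplit by (intro exI[of _ s0] exI[of _ ln]) auto
    next
      case False
      have bad: "real ln \<le> ?c * real ?br"
      proof (cases "ln < M")
        case True
        have l1: "1 \<le> ln" using s0N unfolding ln_def by simp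
        have "f (s0 + 1) \<le> C * f s0" using step[of s0] by simp
        also have "\<dots> \<le> C * t" using fs0 C0 by (intro mult_left_mono) auto
        finally have "f (s0+1) \<le> T2" using CT by simp
        hence "1 \<in> {j\<in>{1..ln}. f (s0+j) \<le> T2}" using l1 by simp
        hence "card {1::nat} \<le> ?br" by (intro card_mono) auto
        hence "?br \<ge> 1" by simp
        have "real ln \<le> real M" using True by simp
        also have "\<dots> = real M * 1" by simp
        also have "\<dots> \<le> real M * real ?br" using \<open>?br \<ge> 1\<close> by (intro mult_left_mono) auto
        also have "\<dots> \<le> ?c * real ?br" using th by (intro mult_right_mono) auto
        finally show ?thesis .
      next
        case False
        with \<open>\<not> (ln \<ge> M \<and> real ?br \<le> \<theta> * real ln)\<close> have "real ?br > \<theta> * real ln" by auto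
        hence "real ln < real ?br / \<theta>" using th by (simp add: divide_simps mult.commute)
        also have "\<dots> \<le> ?c * real ?br" using th by (simp add: divide_simps algebra_simps)
        finally show ?thesis by simp
      qed
      have H: "card {j\<in>{1..N}. f j > T2} = card {j\<in>{1..s0}. f j > T2} + card {j\<in>{1..ln}. f (s0+j) > T2}"
        unfolding Nsplit by (rule card_interval_split)
      have B: "card {j\<in>{1..N}. t < f j \<and> f j \<le> T2} = card {j\<in>{1..s0}. t < f j \<and> f j \<le> T2} + card {j\<in>{1..ln}. t < f (s0+j) \<and> f (s0+j) \<le> T2}"
        unfolding Nsplit by (rule card_interval_split)
      have "{j\<in>{1..ln}. t < f (s0+j) \<and> f (s0+j) \<le> T2} = {j\<in>{1..ln}. f (s0+j) \<le> T2}" using run by auto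
      hence B': "card {j\<in>{1..N}. t < f j \<and> f j \<le> T2} = card {j\<in>{1..s0}. t < f j \<and> f j \<le> T2} + ?br"
        using B by simp
      have sub: "{j\<in>{1..ln}. f (s0+j) > T2} \<subseteq> {1..ln}" by auto
      have Hr: "card {j\<in>{1..ln}. f (s0+j) > T2} \<le> ln"
        using card_mono[OF finite_atLeastAtMost sub] by simp
      have "real (card {j\<in>{1..s0}. f j > T2}) > ?c * real (card {j\<in>{1..s0}. t < f j \<and> f j \<le> T2})"
      proof -
        have "real (card {j\<in>{1..s0}. f j > T2}) \<ge> real (card {j\<in>{1..N}. f j > T2}) - real ln"
          using H Hr by simp
        moreover have "?c * real (card {j\<in>{1..N}. t < f j \<and> f j \<le> T2}) = ?c * real (card {j\<in>{1..s0}. t < f j \<and> f j \<le> T2}) + ?c * real ?br"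
          using B' by (simp add: algebra_simps)
        ultimately show ?thesis using less.prems bad by linarith
      qed
      from less.IH[OF s0N this] obtain s ln' where "f s \<le> t \<and> ln' \<ge> M \<and> s + ln' \<le> s0 \<and> (\<forall>j\<in>{1..ln'}. f (s+j) > t) \<and>
            real (card {j\<in>{1..ln'}. f (s+j) \<le> T2}) \<le> \<theta> * real ln'" by auto
      then show ?thesis using s0N by (intro exI[of _ s] exI[of _ ln']) auto
    qed
  qed
qed

lemma card_compl_interval: "card {j\<in>{1..n::nat}. P j} + card {j\<in>{1..n}. \<not> P j} = n"
proof -
  have "card {j\<in>{1..n::nat}. P j} + card {j\<in>{1..n}. \<not> P j} = card ({j\<in>{1..n::nat}. P j} \<union> {j\<in>{1..n}. \<not> P j})"
    by (intro card_Un_disjoint[symmetric]) auto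
  also have "{j\<in>{1..n::nat}. P j} \<union> {j\<in>{1..n}. \<not> P j} = {1..n}" by auto
  finally show ?thesis by simp
qed

lemma card_mono_interval: "(\<And>j. j \<in> {1..n::nat} \<Longrightarrow> P j \<Longrightarrow> Q j) \<Longrightarrow> card {j\<in>{1..n}. P j} \<le> card {j\<in>{1..n}. Q j}"
  by (intro card_mono) auto

locale wsh =
  fixes p :: real and v :: "int \<Rightarrow> real" and C :: real
  assumes p1: "1 \<le> p" and vpos: "\<And>n. v n > 0" and C1: "C \<ge> 1" and vstep: "\<And>n. v (n+1) \<le> C * v n"
begin

definition Om :: "(int \<Rightarrow> real) \<Rightarrow> int set \<Rightarrow> nat \<Rightarrow> real" where
  "Om a Z j = (\<Sum>m\<in>Z. a m * v (m + int j))"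

lemma v_pow: "v (m + int k) \<le> C ^ k * v m"
proof (induction k)
  case 0 then show ?case by simp
next
  case (Suc k)
  have "v (m + int (Suc k)) = v ((m + int k) + 1)" by (simp add: algebra_simps)
  also have "\<dots> \<le> C * v (m + int k)" by (rule vstep)
  also have "\<dots> \<le> C * (C ^ k * v m)" using Suc C1 by (intro mult_left_mono) auto
  finally show ?case by simp
qed

lemma Om_nonneg: "(\<And>m. a m \<ge> 0) \<Longrightarrow> Om a Z j \<ge> 0"
  unfolding Om_def using vpos by (intro sum_nonneg) (simp add: less_imp_le)

lemma Om_step: assumes "\<And>m. a m \<ge> 0" shows "Om a Z (Suc j) \<le> C * Om a Z j"
proof -
  have "Om a Z (Suc j) = (\<Sum>m\<in>Z. a m * v ((m + int j) + 1))" unfolding Om_def by (simp add: algebra_simps)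
  also have "\<dots> \<le> (\<Sum>m\<in>Z. a m * (C * v (m + int j)))"
    using assms vstep by (intro sum_mono mult_left_mono) auto
  also have "\<dots> = C * Om a Z j" unfolding Om_def by (simp add: sum_distrib_left algebra_simps)
  finally show ?thesis .
qed

lemma Om_pow: assumes "\<And>m. a m \<ge> 0" shows "Om a Z j \<le> C ^ j * Om a Z 0"
proof (induction j)
  case 0 then show ?case by simp
next
  case (Suc j)
  have "Om a Z (Suc j) \<le> C * Om a Z j" by (rule Om_step[OF assms])
  also have "\<dots> \<le> C * (C ^ j * Om a Z 0)" using Suc C1 by (intro mult_left_mono) auto
  finally show ?case by simp
qed

lemma Om_shift: "Om (\<lambda>m. c * a (m - int s)) ((+) (int s) ` Z) j = c * Om a Z (s + j)"
proof -
  have "Om (\<lambda>m. c * a (m - int s)) ((+) (int s) ` Z) j = (\<Sum>m\<in>Z. c * a m * v (m + int (s + j)))"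
    unfolding Om_def by (subst sum.reindex) (auto simp: inj_on_def algebra_simps)
  also have "\<dots> = c * Om a Z (s + j)" unfolding Om_def by (simp add: sum_distrib_left algebra_simps)
  finally show ?thesis .
qed

lemma Om_subset: "finite Z \<Longrightarrow> Z' \<subseteq> Z \<Longrightarrow> (\<And>m. a m \<ge> 0) \<Longrightarrow> Om a Z' j \<le> Om a Z j"
  unfolding Om_def using vpos by (intro sum_mono2) (auto simp: less_imp_le)

lemma Om_cmult: "Om (\<lambda>m. c * a m) Z j = c * Om a Z j"
  unfolding Om_def by (simp add: sum_distrib_left algebra_simps)

lemma UP:
  assumes eps: "\<epsilon> > 0" and th: "\<theta> > 0" and M1: "M \<ge> 1"
  shows "\<exists>k0. \<forall>a Z N. finite Z \<longrightarrow> (\<forall>m. a m \<ge> 0) \<longrightarrow> Om a Z 0 \<le> 1 \<longrightarrow> N \<ge> 1 \<longrightarrow>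
     real (card {j\<in>{1..N}. Om a Z j \<ge> k0}) \<ge> \<epsilon> * real N \<longrightarrow>
     (\<exists>s c L. c > 0 \<and> L \<ge> M \<and> Om (\<lambda>m. c * a (m - int s)) ((+) (int s) ` Z) 0 \<le> 1 \<and>
        real (card {j\<in>{1..L}. Om (\<lambda>m. c * a (m - int s)) ((+) (int s) ` Z) j \<ge> K}) \<ge> (1 - \<theta>) * real L)"
proof -
  define \<rho> where "\<rho> = max (C + 1) (K + 1)"
  have rhoC: "\<rho> > C" and rhoK: "\<rho> > K" and rho1: "\<rho> > 1" using C1 unfolding \<rho>_def by auto
  define cc where "cc = real M + 1 / \<theta>"
  define R where "R = nat \<lceil>cc / \<epsilon>\<rceil> + 1"
  have R1: "R \<ge> 1" unfolding R_def by simp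
  have Rbig: "\<epsilon> * real R > cc"
  proof -
    have "real R > cc / \<epsilon>" unfolding R_def by linarith
    thus ?thesis using eps by (simp add: divide_simps mult.commute)
  qed
  show ?thesis
  proof (intro exI[of _ "\<rho> ^ (R+1)"] allI impI)
    fix a Z N assume fZ: "finite Z" and a0: "\<forall>m. a m \<ge> 0" and O0: "Om a Z 0 \<le> 1" and N1: "N \<ge> 1"
      and cnt: "real (card {j\<in>{1..N}. Om a Z j \<ge> \<rho> ^ (R+1)}) \<ge> \<epsilon> * real N"
    let ?f = "\<lambda>j. Om a Z j"
    define B where "B r = {j\<in>{1..N}. \<rho> ^ r < ?f j \<and> ?f j \<le> \<rho> ^ (r+1)}" for r
    have disj: "B r \<inter> B r' = {}" if "r \<noteq> r'" for r r'
    proof -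
      { fix r r' :: nat assume "r < r'"
        hence "\<rho> ^ (r+1) \<le> \<rho> ^ r'" using rho1 by (intro power_increasing) auto
        hence "B r \<inter> B r' = {}" unfolding B_def by auto }
      thus ?thesis using that by (metis inf_commute linorder_neqE_nat)
    qed
    have "(\<Sum>r<R. card (B r)) = card (\<Union>r<R. B r)"
    proof (rule card_UN_disjoint[symmetric])
      show "\<forall>i\<in>{..<R}. finite (B i)" unfolding B_def by simp
      show "\<forall>i\<in>{..<R}. \<forall>j\<in>{..<R}. i \<noteq> j \<longrightarrow> B i \<inter> B j = {}" using disj by blast
    qed simp
    also have "\<dots> \<le> card {1..N}" by (intro card_mono) (auto simp: B_def)
    finally have sumB: "(\<Sum>r<R. card (B r)) \<le> N" by simp
    obtain r where r: "r < R" "real R * real (card (B r)) \<le> real N"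
    proof (rule ccontr)
      assume "\<not> thesis"
      hence all: "\<forall>r<R. real N < real R * real (card (B r))" using that by force
      have "(\<Sum>r<R. real N) < (\<Sum>r<R. real R * real (card (B r)))"
        using R1 all by (intro sum_strict_mono) (auto simp: lessThan_empty_iff)
      hence "real R * real N < real R * real (\<Sum>r<R. card (B r))"
        by (simp add: sum_distrib_left)
      hence "real N < real (\<Sum>r<R. card (B r))" using R1 by (simp add: mult_less_cancel_left)
      with sumB show False by linarith
    qed
    let ?t = "\<rho> ^ r" and ?T = "\<rho> ^ (r+1)"
    have tpos: "?t > 0" using rho1 by simp
    have t1: "?t \<ge> 1" using rho1 by simp
    have hi: "card {j\<in>{1..N}. ?f j \<ge> \<rho> ^ (R+1)} \<le> card {j\<in>{1..N}. ?f j > ?T}"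
    proof (intro card_mono_interval)
      fix j assume "?f j \<ge> \<rho> ^ (R+1)"
      moreover have "\<rho> ^ (r+1) < \<rho> ^ (R+1)" using rho1 r(1) by (intro power_strict_increasing) auto
      ultimately show "?f j > ?T" by simp
    qed
    have "real (card {j\<in>{1..N}. ?f j > ?T}) > cc * real (card {j\<in>{1..N}. ?t < ?f j \<and> ?f j \<le> ?T})"
    proof -
      have "cc * real (card (B r)) \<le> cc * (real N / real R)"
        using r(2) R1 th by (intro mult_left_mono) (auto simp: cc_def divide_simps mult.commute)
      also have "\<dots> < \<epsilon> * real N"
      proof -
        have "cc * real N < \<epsilon> * real R * real N" using Rbig N1 by (intro mult_strict_right_mono) auto
        thus ?thesis using R1 by (simp add: divide_simps algebra_simps)
      qed
      also have "\<dots> \<le> real (card {j\<in>{1..N}. ?f j > ?T})" using cnt hi by linarith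
      finally show ?thesis unfolding B_def by simp
    qed
    from runs_lemma[of ?f ?t C ?T M \<theta> N, OF _ _ _ _ _ M1 th this[unfolded cc_def]]
    obtain s ln where sl: "?f s \<le> ?t" "ln \<ge> M" "\<forall>j\<in>{1..ln}. ?f (s+j) > ?t"
        "real (card {j\<in>{1..ln}. ?f (s+j) \<le> ?T}) \<le> \<theta> * real ln"
    proof -
      have "?f 0 \<le> ?t" using O0 t1 by simp
      moreover have "\<And>j. ?f (Suc j) \<le> C * ?f j" using a0 by (intro Om_step) auto
      moreover have "C \<ge> 0" using C1 by simp
      moreover have "C * ?t < ?T" using rhoC tpos by simp
      moreover have "?t \<le> ?T" using rho1 by simp
      ultimately show ?thesis using that runs_lemma[of ?f ?t C ?T M \<theta> N] M1 th
        \<open>real (card {j\<in>{1..N}. ?f j > ?T}) > cc * _\<close> unfolding cc_def by blast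
    qed
    define c where "c = 1 / ?t"
    have cpos: "c > 0" unfolding c_def using tpos by simp
    let ?a = "\<lambda>m. c * a (m - int s)" and ?Z = "(+) (int s) ` Z"
    have Oa: "Om ?a ?Z j = c * ?f (s + j)" for j by (rule Om_shift)
    have "Om ?a ?Z 0 = c * ?f s" using Oa[of 0] by simp
    also have "\<dots> \<le> c * ?t" using sl(1) cpos by (intro mult_left_mono) auto
    also have "c * ?t = 1" unfolding c_def using tpos rho1 by (simp add: divide_simps)
    finally have "Om ?a ?Z 0 \<le> 1" .
    moreover have "real (card {j\<in>{1..ln}. Om ?a ?Z j \<ge> K}) \<ge> (1 - \<theta>) * real ln"
    proof -
      have "card {j\<in>{1..ln}. \<not> ?f (s+j) \<le> ?T} \<le> card {j\<in>{1..ln}. Om ?a ?Z j \<ge> K}"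
      proof (intro card_mono_interval)
        fix j assume "\<not> ?f (s+j) \<le> ?T"
        hence "c * ?f (s+j) > c * ?T" using cpos by simp
        also have "c * ?T = \<rho>" unfolding c_def using tpos rho1 by (simp add: divide_simps)
        finally show "Om ?a ?Z j \<ge> K" using Oa rhoK by simp
      qed
      moreover have "card {j\<in>{1..ln}. ?f (s+j) \<le> ?T} + card {j\<in>{1..ln}. \<not> ?f (s+j) \<le> ?T} = ln"
        by (rule card_compl_interval)
      ultimately show ?thesis using sl(4) by (simp add: algebra_simps)
    qed
    ultimately show "\<exists>s c L. c > 0 \<and> L \<ge> M \<and> Om (\<lambda>m. c * a (m - int s)) ((+) (int s) ` Z) 0 \<le> 1 \<and>
        real (card {j\<in>{1..L}. Om (\<lambda>m. c * a (m - int s)) ((+) (int s) ` Z) j \<ge> K}) \<ge> (1 - \<theta>) * real L"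
      using cpos sl(2) by blast
  qed
qed

end

context wsh begin

definition B0 :: bool where
  "B0 \<longleftrightarrow> (\<exists>\<epsilon>>0. \<forall>k M. \<exists>a Z N. finite Z \<and> (\<forall>m. a m \<ge> 0) \<and> Om a Z 0 \<le> 1 \<and> N \<ge> M \<and> N \<ge> 1 \<and>
            real (card {j\<in>{1..N}. Om a Z j \<ge> k}) \<ge> \<epsilon> * real N)"

lemma ESC:
  assumes b0: B0 and ths: "\<theta>s > 0"
  shows "\<exists>a Z L. finite Z \<and> (\<forall>m. a m \<ge> 0) \<and> Z \<inter> {- int R..int R} = {} \<and> Om a Z 0 \<le> 1 \<and> L \<ge> Ms \<and>
           real (card {j\<in>{1..L}. Om a Z j \<ge> Ks}) \<ge> (1 - \<theta>s) * real L"
proof -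
  define th where "th = min \<theta>s 1"
  have th0: "th > 0" and th1: "th \<le> 1" and thle: "th \<le> \<theta>s" using ths unfolding th_def by auto
  define \<theta> where "\<theta> = th / 2"
  have tpos: "\<theta> > 0" unfolding \<theta>_def using th0 by simp
  define M' where "M' = max Ms 1"
  have M'1: "M' \<ge> 1" and M'M: "M' \<ge> Ms" unfolding M'_def by auto
  define d where "d = 2 * R + 1"
  define nE where "nE = real (2 * R + 1)"
  have nE0: "nE > 0" unfolding nE_def by simp
  define Ze where "Ze = {int R + 1 .. int R + 1 + int (2 * R)}"
  define e where "e i = 1 / (v i * nE)" for i
  have fZe: "finite Ze" unfolding Ze_def by simp
  have cZe: "card Ze = 2 * R + 1" unfolding Ze_def by simp
  have e0: "\<forall>i. e i \<ge> 0" unfolding e_def using vpos nE0 by (simp add: less_imp_le)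
  have Oe0: "Om e Ze 0 = 1"
  proof -
    have "Om e Ze 0 = (\<Sum>i\<in>Ze. 1 / nE)" unfolding Om_def e_def using vpos
      by (intro sum.cong) (auto simp: divide_simps less_imp_le vpos[THEN less_imp_neq, symmetric])
    also have "\<dots> = 1" using cZe nE0 unfolding nE_def by simp
    finally show ?thesis .
  qed
  have dom: "v (m + int j) / v m \<le> C ^ d * nE * Om e Ze (j - d)" if "m \<in> {- int R..int R}" "j \<ge> d" for m j
  proof -
    have iZe: "m + int d \<in> Ze" using that unfolding Ze_def d_def by auto
    have "v (m + int d) \<le> C ^ d * v m" by (rule v_pow)
    hence "v (m + int j) / (C ^ d * v m) \<le> v (m + int j) / v (m + int d)"
      using vpos[of "m + int d"] vpos[of "m + int j"] by (intro divide_left_mono) auto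
    also have "v (m + int j) / v (m + int d) = nE * (e (m + int d) * v (m + int d + int (j - d)))"
    proof -
      have "m + int d + int (j - d) = m + int j" using that(2) by simp
      thus ?thesis unfolding e_def using nE0 vpos[of "m + int d"] by (simp add: field_simps)
    qed
    also have "e (m + int d) * v (m + int d + int (j - d)) \<le> Om e Ze (j - d)"
      unfolding Om_def using iZe fZe e0 vpos by (intro member_le_sum) (auto simp: less_imp_le)
    hence "nE * (e (m + int d) * v (m + int d + int (j - d))) \<le> nE * Om e Ze (j - d)"
      using nE0 by simp
    finally have "v (m + int j) / (C ^ d * v m) \<le> nE * Om e Ze (j - d)" .
    moreover have "C ^ d > 0" using C1 by simp
    ultimately show ?thesis using vpos[of m] by (simp add: divide_simps algebra_simps)
  qed
  obtain k1 where k1: "\<forall>a Z N. finite Z \<longrightarrow> (\<forall>m. a m \<ge> 0) \<longrightarrow> Om a Z 0 \<le> 1 \<longrightarrow> N \<ge> 1 \<longrightarrow>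
     real (card {j\<in>{1..N}. Om a Z j \<ge> k1}) \<ge> (\<theta>/2) * real N \<longrightarrow>
     (\<exists>s c L. c > 0 \<and> L \<ge> M' \<and> Om (\<lambda>m. c * a (m - int s)) ((+) (int s) ` Z) 0 \<le> 1 \<and>
        real (card {j\<in>{1..L}. Om (\<lambda>m. c * a (m - int s)) ((+) (int s) ` Z) j \<ge> Ks}) \<ge> (1 - th) * real L)"
    using UP[of "\<theta>/2" th M' Ks] tpos th0 M'1 by auto
  define K where "K = max (2 * Ks) (2 * C ^ d * nE * k1)"
  define M1 where "M1 = max M' (nat \<lceil>2 * real d / \<theta>\<rceil> + 1)"
  have M11: "M1 \<ge> 1" unfolding M1_def by simp
  obtain \<epsilon>b where eb: "\<epsilon>b > 0" and b0': "\<forall>k M. \<exists>a Z N. finite Z \<and> (\<forall>m. a m \<ge> 0) \<and> Om a Z 0 \<le> 1 \<and> N \<ge> M \<and> N \<ge> 1 \<and>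
            real (card {j\<in>{1..N}. Om a Z j \<ge> k}) \<ge> \<epsilon>b * real N"
    using b0 unfolding B0_def by blast
  obtain k0 where k0: "\<forall>a Z N. finite Z \<longrightarrow> (\<forall>m. a m \<ge> 0) \<longrightarrow> Om a Z 0 \<le> 1 \<longrightarrow> N \<ge> 1 \<longrightarrow>
     real (card {j\<in>{1..N}. Om a Z j \<ge> k0}) \<ge> \<epsilon>b * real N \<longrightarrow>
     (\<exists>s c L. c > 0 \<and> L \<ge> M1 \<and> Om (\<lambda>m. c * a (m - int s)) ((+) (int s) ` Z) 0 \<le> 1 \<and>
        real (card {j\<in>{1..L}. Om (\<lambda>m. c * a (m - int s)) ((+) (int s) ` Z) j \<ge> K}) \<ge> (1 - \<theta>) * real L)"
    using UP[of \<epsilon>b \<theta> M1 K] eb tpos M11 by auto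
  obtain a Z N where aZN: "finite Z" "\<forall>m. a m \<ge> 0" "Om a Z 0 \<le> 1" "N \<ge> 1"
      "real (card {j\<in>{1..N}. Om a Z j \<ge> k0}) \<ge> \<epsilon>b * real N"
    using spec[OF spec[OF b0', of k0], of 1] by blast
  obtain s c L where scL: "c > 0" "L \<ge> M1" "Om (\<lambda>m. c * a (m - int s)) ((+) (int s) ` Z) 0 \<le> 1"
      "real (card {j\<in>{1..L}. Om (\<lambda>m. c * a (m - int s)) ((+) (int s) ` Z) j \<ge> K}) \<ge> (1 - \<theta>) * real L"
    using k0 aZN by blast
  define a' where "a' = (\<lambda>m. c * a (m - int s))"
  define Z' where "Z' = (+) (int s) ` Z"
  have fZ': "finite Z'" unfolding Z'_def using aZN(1) by simp
  have a'0: "\<forall>m. a' m \<ge> 0" unfolding a'_def using scL(1) aZN(2) by simp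
  have O'0: "Om a' Z' 0 \<le> 1" using scL(3) unfolding a'_def Z'_def .
  have cntK: "real (card {j\<in>{1..L}. Om a' Z' j \<ge> K}) \<ge> (1 - \<theta>) * real L" using scL(4) unfolding a'_def Z'_def .
  define Zo where "Zo = Z' - {- int R..int R}"
  define Zi where "Zi = Z' \<inter> {- int R..int R}"
  have split: "Om a' Z' j = Om a' Zi j + Om a' Zo j" for j
    unfolding Om_def Zi_def Zo_def using fZ' by (rule sum.Int_Diff)
  have Oi0: "Om a' Zi 0 \<le> 1" using Om_subset[of Z' Zi a' 0] fZ' a'0 O'0 unfolding Zi_def by auto
  have Oo0: "Om a' Zo 0 \<le> 1" using Om_subset[of Z' Zo a' 0] fZ' a'0 O'0 unfolding Zo_def by auto
  have Oi_dom: "Om a' Zi j \<le> C ^ d * nE * Om e Ze (j - d)" if "j \<ge> d" for j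
  proof -
    have "Om a' Zi j = (\<Sum>m\<in>Zi. (a' m * v m) * (v (m + int j) / v m))"
      unfolding Om_def using vpos by (intro sum.cong) (auto simp: divide_simps less_imp_neq[symmetric])
    also have "\<dots> \<le> (\<Sum>m\<in>Zi. (a' m * v m) * (C ^ d * nE * Om e Ze (j - d)))"
      using a'0 vpos dom that unfolding Zi_def
      by (intro sum_mono mult_left_mono) (auto simp: less_imp_le)
    also have "\<dots> = Om a' Zi 0 * (C ^ d * nE * Om e Ze (j - d))"
      unfolding Om_def by (simp add: sum_distrib_right)
    also have "\<dots> \<le> 1 * (C ^ d * nE * Om e Ze (j - d))"
      using Oi0 Om_nonneg[of e Ze "j - d"] e0 C1 nE0 by (intro mult_right_mono) auto
    finally show ?thesis by simp
  qed
  show ?thesis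
  proof (cases "real (card {j\<in>{1..L}. Om a' Zo j \<ge> K/2}) \<ge> (1 - th) * real L")
    case True
    have "card {j\<in>{1..L}. Om a' Zo j \<ge> K/2} \<le> card {j\<in>{1..L}. Om a' Zo j \<ge> Ks}"
      by (rule card_mono_interval) (auto simp: K_def)
    moreover have "(1 - \<theta>s) * real L \<le> (1 - th) * real L" using thle by (intro mult_right_mono) auto
    ultimately have "real (card {j\<in>{1..L}. Om a' Zo j \<ge> Ks}) \<ge> (1 - \<theta>s) * real L" using True by linarith
    moreover have "finite Zo" unfolding Zo_def using fZ' by simp
    moreover have "Zo \<inter> {- int R..int R} = {}" unfolding Zo_def by auto
    moreover have "L \<ge> Ms" using scL(2) M'M unfolding M1_def by simp
    ultimately show ?thesis using a'0 Oo0 by blast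
  next
    case False
    let ?P = "\<lambda>j. Om a' Z' j \<ge> K" and ?Q = "\<lambda>j. Om a' Zo j \<ge> K/2"
    define H where "H = {i\<in>{1..L}. Om e Ze i \<ge> k1}"
    have c1: "card {j\<in>{1..L}. ?P j} \<le> card {j\<in>{1..L}. ?P j \<and> \<not> ?Q j} + card {j\<in>{1..L}. ?Q j}"
    proof -
      have "{j\<in>{1..L}. ?P j} \<subseteq> {j\<in>{1..L}. ?P j \<and> \<not> ?Q j} \<union> {j\<in>{1..L}. ?Q j}" by auto
      hence "card {j\<in>{1..L}. ?P j} \<le> card ({j\<in>{1..L}. ?P j \<and> \<not> ?Q j} \<union> {j\<in>{1..L}. ?Q j})"
        by (intro card_mono) auto
      also have "\<dots> \<le> card {j\<in>{1..L}. ?P j \<and> \<not> ?Q j} + card {j\<in>{1..L}. ?Q j}" by (rule card_Un_le)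
      finally show ?thesis .
    qed
    have c2: "card {j\<in>{1..L}. ?P j \<and> \<not> ?Q j} \<le> d + card H"
    proof -
      have "{j\<in>{1..L}. ?P j \<and> \<not> ?Q j} \<subseteq> {1..d} \<union> {j\<in>{1..L}. j > d \<and> ?P j \<and> \<not> ?Q j}" by auto
      hence "card {j\<in>{1..L}. ?P j \<and> \<not> ?Q j} \<le> card ({1..d} \<union> {j\<in>{1..L}. j > d \<and> ?P j \<and> \<not> ?Q j})"
        by (intro card_mono) auto
      also have "\<dots> \<le> card {1..d} + card {j\<in>{1..L}. j > d \<and> ?P j \<and> \<not> ?Q j}" by (rule card_Un_le)
      also have "card {j\<in>{1..L}. j > d \<and> ?P j \<and> \<not> ?Q j} \<le> card H"
      proof (rule card_inj_on_le[of "\<lambda>j. j - d"])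
        show "inj_on (\<lambda>j. j - d) {j\<in>{1..L}. j > d \<and> ?P j \<and> \<not> ?Q j}" by (auto simp: inj_on_def)
        show "finite H" unfolding H_def by simp
        show "(\<lambda>j. j - d) ` {j\<in>{1..L}. j > d \<and> ?P j \<and> \<not> ?Q j} \<subseteq> H"
        proof
          fix i assume "i \<in> (\<lambda>j. j - d) ` {j\<in>{1..L}. j > d \<and> ?P j \<and> \<not> ?Q j}"
          then obtain j where j: "i = j - d" "j \<in> {1..L}" "j > d" "?P j" "\<not> ?Q j" by auto
          have "K \<le> Om a' Zi j + Om a' Zo j" using j(4) split by simp
          hence "Om a' Zi j \<ge> K/2" using j(5) by simp
          hence "K/2 \<le> C ^ d * nE * Om e Ze i" using Oi_dom[of j] j(1,3) by simp
          moreover have "C ^ d * nE * k1 \<le> K/2" unfolding K_def by simp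
          ultimately have "C ^ d * nE * k1 \<le> C ^ d * nE * Om e Ze i" by linarith
          moreover have "C ^ d * nE > 0" using C1 nE0 by simp
          ultimately have "k1 \<le> Om e Ze i" by (simp add: mult_le_cancel_left_pos)
          thus "i \<in> H" unfolding H_def using j by auto
        qed
      qed
      finally show ?thesis by simp
    qed
    have Lbig: "real L * \<theta> \<ge> 2 * real d"
    proof -
      have "real L \<ge> 2 * real d / \<theta>" using scL(2) unfolding M1_def by linarith
      thus ?thesis using tpos by (simp add: divide_simps)
    qed
    have cH: "real (card H) \<ge> (\<theta>/2) * real L"
    proof -
      have "real (card H) \<ge> (1 - \<theta>) * real L - (1 - th) * real L - real d"
        using c1 c2 cntK False by linarith
      also have "(1 - \<theta>) * real L - (1 - th) * real L - real d = \<theta> * real L - real d"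
        unfolding \<theta>_def by (simp add: algebra_simps)
      finally show ?thesis using Lbig by (simp add: algebra_simps)
    qed
    have L1: "L \<ge> 1" using scL(2) M11 by simp
    obtain s2 c2 L2 where s2: "c2 > 0" "L2 \<ge> M'" "Om (\<lambda>m. c2 * e (m - int s2)) ((+) (int s2) ` Ze) 0 \<le> 1"
        "real (card {j\<in>{1..L2}. Om (\<lambda>m. c2 * e (m - int s2)) ((+) (int s2) ` Ze) j \<ge> Ks}) \<ge> (1 - th) * real L2"
      using k1[rule_format, where a=e and Z=Ze and N=L] fZe e0 L1 Oe0 cH unfolding H_def by auto
    have "finite ((+) (int s2) ` Ze)" using fZe by simp
    moreover have "(+) (int s2) ` Ze \<inter> {- int R..int R} = {}" unfolding Ze_def by auto
    moreover have "\<forall>m. c2 * e (m - int s2) \<ge> 0" using s2(1) e0 by simp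
    moreover have "(1 - \<theta>s) * real L2 \<le> (1 - th) * real L2" using thle by (intro mult_right_mono) auto
    ultimately show ?thesis using s2 M'M by (intro exI[of _ "\<lambda>m. c2 * e (m - int s2)"] exI[of _ "(+) (int s2) ` Ze"] exI[of _ L2]) auto
  qed
qed

end

context wsh begin

definition Psi :: "(int \<Rightarrow> real) \<Rightarrow> nat \<Rightarrow> real" where
  "Psi x j = infsum (\<lambda>m. \<bar>x m\<bar> powr p * v (m + int j)) UNIV"

lemma ppos: "p > 0" using p1 by simp

lemma term_nonneg: "\<bar>x m\<bar> powr p * v (m + int j) \<ge> 0"
  using vpos by (simp add: less_imp_le)

lemma Psi_nonneg: "Psi x j \<ge> 0"
  unfolding Psi_def by (intro infsum_nonneg) (rule term_nonneg)

lemma Psi_le: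
  assumes "\<And>F. finite F \<Longrightarrow> (\<Sum>m\<in>F. \<bar>x m\<bar> powr p * v (m + int j)) \<le> B"
  shows "(\<lambda>m. \<bar>x m\<bar> powr p * v (m + int j)) summable_on UNIV" "Psi x j \<le> B"
proof -
  show sm: "(\<lambda>m. \<bar>x m\<bar> powr p * v (m + int j)) summable_on UNIV"
    by (intro nonneg_bdd_above_summable_on term_nonneg) (use assms in \<open>auto intro!: bdd_aboveI2\<close>)
  show "Psi x j \<le> B" unfolding Psi_def by (intro infsum_le_finite_sums[OF sm]) (use assms in auto)
qed

lemma Psi_ge:
  assumes "(\<lambda>m. \<bar>x m\<bar> powr p * v (m + int j)) summable_on UNIV" "finite F"
  shows "(\<Sum>m\<in>F. \<bar>x m\<bar> powr p * v (m + int j)) \<le> Psi x j"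
  unfolding Psi_def using assms by (intro finite_sum_le_infsum) (auto intro: term_nonneg)

lemma lpw_summable_shift:
  assumes "x \<in> lpw p v"
  shows "(\<lambda>m. \<bar>x m\<bar> powr p * v (m + int j)) summable_on UNIV"
proof -
  have s: "(\<lambda>n. \<bar>x n\<bar> powr p * v n) summable_on UNIV" using assms unfolding lpw_def by simp
  have "(\<lambda>n. C ^ j * (\<bar>x n\<bar> powr p * v n)) summable_on UNIV"
    using summable_on_cmult_right[OF s] by simp
  thus ?thesis
  proof (rule summable_on_comparison_test)
    fix m :: int
    have "\<bar>x m\<bar> powr p * v (m + int j) \<le> \<bar>x m\<bar> powr p * (C ^ j * v m)"
      by (rule mult_left_mono[OF v_pow]) simp
    thus "\<bar>x m\<bar> powr p * v (m + int j) \<le> C ^ j * (\<bar>x m\<bar> powr p * v m)" by (simp add: algebra_simps)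
    show "0 \<le> \<bar>x m\<bar> powr p * v (m + int j)" by (rule term_nonneg)
  qed
qed

lemma fwd_iter: "(fwd_shift ^^ j) x = (\<lambda>n. x (n - int j))"
proof (induction j)
  case 0 then show ?case by simp
next
  case (Suc j)
  have "(fwd_shift ^^ Suc j) x = fwd_shift ((fwd_shift ^^ j) x)" by (simp only: funpow.simps comp_apply)
  also have "\<dots> = (\<lambda>n. x (n - int (Suc j)))" unfolding Suc fwd_shift_def by (simp add: algebra_simps)
  finally show ?case .
qed

lemma dist_iter:
  "lpw_dist p v ((fwd_shift ^^ j) x) ((fwd_shift ^^ j) y) = Psi (\<lambda>m. x m - y m) j powr (1/p)"
proof -
  have "infsum (\<lambda>n. \<bar>x (n - int j) - y (n - int j)\<bar> powr p * v n) UNIV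
      = infsum (\<lambda>m. (\<lambda>n. \<bar>x (n - int j) - y (n - int j)\<bar> powr p * v n) (m + int j)) UNIV"
    by (rule infsum_reindex_bij_betw[symmetric]) (auto simp: bij_betw_def inj_on_def image_def intro!: exI[of _ "_ - int j"])
  also have "\<dots> = Psi (\<lambda>m. x m - y m) j" unfolding Psi_def by simp
  finally show ?thesis unfolding lpw_dist_def lpw_norm_def fwd_iter by simp
qed

lemma dist0: "lpw_dist p v x y = Psi (\<lambda>m. x m - y m) 0 powr (1/p)"
  using dist_iter[of 0 x y] by simp

lemma powr_lt1_iff: "Psi x j powr (1/p) < 1 \<longleftrightarrow> Psi x j < 1"
proof -
  have "Psi x j \<ge> 0" by (rule Psi_nonneg)
  show ?thesis
  proof
    assume "Psi x j powr (1/p) < 1"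
    show "Psi x j < 1"
    proof (rule ccontr)
      assume "\<not> Psi x j < 1"
      hence "1 \<le> Psi x j" by simp
      hence "1 powr (1/p) \<le> Psi x j powr (1/p)" using ppos by (intro powr_mono2) auto
      with \<open>Psi x j powr (1/p) < 1\<close> show False by simp
    qed
  next
    assume "Psi x j < 1"
    hence "Psi x j powr (1/p) < 1 powr (1/p)" using \<open>Psi x j \<ge> 0\<close> ppos by (intro powr_less_mono2) auto
    thus "Psi x j powr (1/p) < 1" by simp
  qed
qed

lemma powr_small: "\<eta> > 0 \<Longrightarrow> Psi x j < \<eta> powr p \<Longrightarrow> Psi x j powr (1/p) < \<eta>"
proof -
  assume e: "\<eta> > 0" and h: "Psi x j < \<eta> powr p"
  have "Psi x j powr (1/p) < (\<eta> powr p) powr (1/p)"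
    using h Psi_nonneg ppos by (intro powr_less_mono2) auto
  also have "\<dots> = \<eta>" using e ppos by (simp add: powr_powr)
  finally show ?thesis .
qed

lemma pow3: fixes a b c u :: real
  assumes "u \<le> \<bar>a\<bar> + \<bar>b\<bar> + \<bar>c\<bar>" "u \<ge> 0"
  shows "u powr p \<le> 3 powr p * (\<bar>a\<bar> powr p + \<bar>b\<bar> powr p + \<bar>c\<bar> powr p)"
proof -
  define mx where "mx = max \<bar>a\<bar> (max \<bar>b\<bar> \<bar>c\<bar>)"
  have "u \<le> 3 * mx" using assms(1) unfolding mx_def by linarith
  hence "u powr p \<le> (3 * mx) powr p" using assms(2) ppos by (intro powr_mono2) auto
  also have "\<dots> = 3 powr p * mx powr p" unfolding mx_def by (simp add: powr_mult)
  also have "mx powr p \<le> \<bar>a\<bar> powr p + \<bar>b\<bar> powr p + \<bar>c\<bar> powr p"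
    unfolding mx_def by (auto simp: max_def)
  finally show ?thesis by simp
qed

lemma powr_inv_p: "x \<ge> 0 \<Longrightarrow> \<bar>x powr (1/p)\<bar> powr p = x"
  using ppos by (simp add: powr_powr)

end

definition yvl :: "(int \<times> rat) list \<Rightarrow> int \<Rightarrow> real" where
  "yvl l m = (case map_of l m of None \<Rightarrow> 0 | Some r \<Rightarrow> real_of_rat r)"

definition lbound :: "(int \<times> rat) list \<Rightarrow> nat" where
  "lbound l = sum_list (map (\<lambda>x. nat \<bar>fst x\<bar>) l)"

lemma yvl_supp: "yvl l m \<noteq> 0 \<Longrightarrow> nat \<bar>m\<bar> \<le> lbound l"
proof -
  assume "yvl l m \<noteq> 0"
  then obtain r where "map_of l m = Some r" unfolding yvl_def by (auto split: option.splits)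
  hence "(m, r) \<in> set l" by (rule map_of_SomeD)
  hence "nat \<bar>m\<bar> \<in> set (map (\<lambda>x. nat \<bar>fst x\<bar>) l)"
    by (simp add: image_iff) (intro bexI[of _ "(m, r)"], auto)
  hence "nat \<bar>m\<bar> \<le> sum_list (map (\<lambda>x. nat \<bar>fst x\<bar>) l)" by (rule member_le_sum_list) simp
  thus ?thesis unfolding lbound_def .
qed

definition yl :: "nat \<Rightarrow> (int \<times> rat) list" where
  "yl q = from_nat (fst (prod_decode q))"

definition yv :: "nat \<Rightarrow> int \<Rightarrow> real" where
  "yv q = yvl (yl q)"

definition YB :: "nat \<Rightarrow> nat" where
  "YB b = (\<Sum>q\<le>b. lbound (yl q))"

lemma YB_mono: "b \<le> b' \<Longrightarrow> YB b \<le> YB b'"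
  unfolding YB_def by (intro sum_mono2) auto

lemma yv_supp: "yv q m \<noteq> 0 \<Longrightarrow> q \<le> b \<Longrightarrow> nat \<bar>m\<bar> \<le> YB b"
proof -
  assume "yv q m \<noteq> 0" "q \<le> b"
  hence "nat \<bar>m\<bar> \<le> lbound (yl q)" unfolding yv_def using yvl_supp by blast
  also have "lbound (yl q) \<le> YB b" unfolding YB_def using \<open>q \<le> b\<close>
    by (intro member_le_sum) auto
  finally show ?thesis .
qed

definition bnd :: "int set \<Rightarrow> nat" where
  "bnd Z = Max (insert 0 ((\<lambda>m. nat \<bar>m\<bar>) ` Z))"

lemma bnd_ge: "finite Z \<Longrightarrow> m \<in> Z \<Longrightarrow> nat \<bar>m\<bar> \<le> bnd Z"
  unfolding bnd_def by (intro Max_ge) auto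

definition oq :: "nat \<Rightarrow> nat" where "oq b = fst (prod_decode b)"
definition ok :: "nat \<Rightarrow> nat" where "ok b = fst (prod_decode (snd (prod_decode b)))"

lemma oq_le: "oq b \<le> b"
proof -
  have "fst (prod_decode b) \<le> prod_encode (prod_decode b)"
    by (metis le_prod_encode_1 prod.collapse)
  thus ?thesis unfolding oq_def by simp
qed

lemma oq_enc: "oq (prod_encode (q, prod_encode (k, i))) = q" unfolding oq_def by simp
lemma ok_enc: "ok (prod_encode (q, prod_encode (k, i))) = k" unfolding ok_def by simp
lemma enc_ge: "prod_encode (q, prod_encode (k, i)) \<ge> i"
  by (meson le_prod_encode_2 order_trans)

lemma geom_tail: "(\<Sum>c\<in>{c. c < K \<and> q \<le> c}. (1/2::real) ^ c) \<le> 2 * (1/2) ^ q"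
proof -
  have "{c. c < K \<and> q \<le> c} \<subseteq> (\<lambda>i. q + i) ` {..<K}"
  proof
    fix c assume "c \<in> {c. c < K \<and> q \<le> c}"
    thus "c \<in> (\<lambda>i. q + i) ` {..<K}" using image_eqI[of c "\<lambda>i. q+i" "c - q" "{..<K}"] by auto
  qed
  hence "(\<Sum>c\<in>{c. c < K \<and> q \<le> c}. (1/2::real) ^ c) \<le> (\<Sum>c\<in>(\<lambda>i. q + i) ` {..<K}. (1/2::real) ^ c)"
    by (intro sum_mono2) auto
  also have "\<dots> = (\<Sum>i<K. (1/2::real) ^ (q + i))" by (subst sum.reindex) (auto simp: inj_on_def)
  also have "\<dots> = (1/2) ^ q * (\<Sum>i<K. (1/2::real) ^ i)" by (simp add: power_add sum_distrib_left)
  also have "(\<Sum>i<K. (1/2::real) ^ i) = (1 - (1/2)^K) / (1/2)" by (subst sum_gp_strict) simp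
  also have "\<dots> \<le> 2" by simp
  finally show ?thesis by (simp add: mult.commute mult_left_mono)
qed

locale wsh_c = wsh +
  assumes b0: B0
    and astar: "\<And>R \<delta>. \<delta> > 0 \<Longrightarrow> UD1 {j. \<forall>m. \<bar>m\<bar> \<le> int R \<longrightarrow> v (m + int j) < \<delta>}"
begin

definition Bspec :: "nat \<Rightarrow> nat \<Rightarrow> nat \<Rightarrow> (int \<Rightarrow> real) \<times> int set \<times> nat \<Rightarrow> bool" where
  "Bspec b R Mt x \<longleftrightarrow> finite (fst (snd x)) \<and> (\<forall>m. fst x m \<ge> 0) \<and> fst (snd x) \<inter> {- int R..int R} = {} \<and>
     (\<forall>j\<le>Mt. Om (fst x) (fst (snd x)) j \<le> (1/2)^b) \<and> snd (snd x) \<ge> Mt + b + 1 \<and>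
     real (card {j\<in>{1..snd (snd x)}. Om (fst x) (fst (snd x)) j \<ge> 1}) \<ge> (1 - 1/(real b + 1)) * real (snd (snd x))"

lemma Bspec_ex: "\<exists>x. Bspec b R Mt x"
proof -
  define Ks where "Ks = 2 ^ b * C ^ Mt"
  have Kpos: "Ks > 0" unfolding Ks_def using C1 by simp
  obtain a Z L where aZL: "finite Z" "\<forall>m. a m \<ge> 0" "Z \<inter> {- int R..int R} = {}" "Om a Z 0 \<le> 1" "L \<ge> Mt + b + 1"
     "real (card {j\<in>{1..L}. Om a Z j \<ge> Ks}) \<ge> (1 - 1/(real b + 1)) * real L"
    using ESC[OF b0, of "1/(real b + 1)" R "Mt + b + 1" Ks] by auto
  define a' where "a' = (\<lambda>m. (1/Ks) * a m)"
  have Oa': "Om a' Z j = (1/Ks) * Om a Z j" for j unfolding a'_def by (rule Om_cmult)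
  have "Bspec b R Mt (a', Z, L)"
    unfolding Bspec_def fst_conv snd_conv
  proof (intro conjI allI impI)
    show "finite Z" "Z \<inter> {- int R..int R} = {}" "L \<ge> Mt + b + 1" using aZL by auto
    fix m show "a' m \<ge> 0" unfolding a'_def using aZL(2) Kpos by simp
  next
    fix j assume "j \<le> Mt"
    have "Om a Z j \<le> C ^ j * Om a Z 0" using aZL(2) by (intro Om_pow) auto
    also have "\<dots> \<le> C ^ Mt * 1" using aZL(4) C1 \<open>j \<le> Mt\<close>
      by (intro mult_mono power_increasing) (auto simp: Om_nonneg aZL(2))
    finally have "Om a Z j \<le> C ^ Mt" by simp
    hence "(1/Ks) * Om a Z j \<le> (1/Ks) * C ^ Mt" using Kpos by (intro mult_left_mono) auto
    also have "(1/Ks) * C ^ Mt = (1/2)^b" unfolding Ks_def using C1 by (simp add: power_one_over)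
    finally show "Om a' Z j \<le> (1/2)^b" using Oa' by simp
  next
    have "card {j\<in>{1..L}. Om a Z j \<ge> Ks} \<le> card {j\<in>{1..L}. Om a' Z j \<ge> 1}"
    proof (rule card_mono_interval)
      fix j assume "Om a Z j \<ge> Ks"
      hence "(1/Ks) * Om a Z j \<ge> (1/Ks) * Ks" using Kpos by (intro mult_left_mono) auto
      thus "Om a' Z j \<ge> 1" using Oa' Kpos by simp
    qed
    thus "real (card {j\<in>{1..L}. Om a' Z j \<ge> 1}) \<ge> (1 - 1/(real b + 1)) * real L" using aZL(6) by linarith
  qed
  thus ?thesis by blast
qed

definition chooseB :: "nat \<Rightarrow> nat \<Rightarrow> nat \<Rightarrow> (int \<Rightarrow> real) \<times> int set \<times> nat" where
  "chooseB b R Mt = (SOME x. Bspec b R Mt x)"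

lemma chooseB: "Bspec b R Mt (chooseB b R Mt)"
  unfolding chooseB_def using Bspec_ex by (rule someI_ex)

definition Gset :: "nat \<Rightarrow> real \<Rightarrow> nat set" where
  "Gset R \<delta> = {j. \<forall>m. \<bar>m\<bar> \<le> int R \<longrightarrow> v (m + int j) < \<delta>}"

definition Mspec :: "nat \<Rightarrow> nat \<Rightarrow> real \<Rightarrow> nat \<Rightarrow> nat \<Rightarrow> bool" where
  "Mspec b R \<delta> M0 N \<longleftrightarrow> N \<ge> M0 \<and> real (card (Gset R \<delta> \<inter> {1..N})) \<ge> (1 - 1/(real b + 1)) * real N"

definition chooseM :: "nat \<Rightarrow> nat \<Rightarrow> real \<Rightarrow> nat \<Rightarrow> nat" where
  "chooseM b R \<delta> M0 = (SOME N. Mspec b R \<delta> M0 N)"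

lemma chooseM: "\<delta> > 0 \<Longrightarrow> Mspec b R \<delta> M0 (chooseM b R \<delta> M0)"
proof -
  assume d: "\<delta> > 0"
  have "UD1 (Gset R \<delta>)" unfolding Gset_def by (rule astar[OF d])
  moreover have "1/(real b + 1) > 0" by simp
  ultimately obtain N where "N \<ge> M0" "real (card (Gset R \<delta> \<inter> {1..N})) \<ge> (1 - 1/(real b + 1)) * real N"
    unfolding UD1_def by blast
  hence "\<exists>N. Mspec b R \<delta> M0 N" unfolding Mspec_def by blast
  thus ?thesis unfolding chooseM_def by (rule someI_ex)
qed

primrec st :: "nat \<Rightarrow> nat \<times> nat \<times> real" where
  "st 0 = (0, 0, 0)"
| "st (Suc b) = (let R = fst (st b); Mt = fst (snd (st b)); TM = snd (snd (st b));
      B = chooseB b (R + b + YB b) Mt;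
      Rn = R + b + YB b + bnd (fst (snd B)); TMn = TM + sum (fst B) (fst (snd B))
    in (Rn, chooseM b Rn ((1/2)^b / (1 + TMn)) ((b+1) * (Mt + snd (snd B) + 1)), TMn))"

definition Rs where "Rs b = fst (st b)"
definition Ms where "Ms b = fst (snd (st b))"
definition TMs where "TMs b = snd (snd (st b))"
definition blk where "blk b = chooseB b (Rs b + b + YB b) (Ms b)"
definition Ab where "Ab b = fst (blk b)"
definition Zb where "Zb b = fst (snd (blk b))"
definition Lb where "Lb b = snd (snd (blk b))"
definition dl where "dl b = (1/2)^b / (1 + TMs (Suc b))"

lemma Rs_Suc: "Rs (Suc b) = Rs b + b + YB b + bnd (Zb b)"
  unfolding Rs_def Zb_def blk_def Ms_def by (simp add: Let_def Rs_def)
lemma TMs_Suc: "TMs (Suc b) = TMs b + sum (Ab b) (Zb b)"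
  unfolding TMs_def Ab_def Zb_def blk_def Ms_def Rs_def by (simp add: Let_def)
lemma Ms_Suc: "Ms (Suc b) = chooseM b (Rs (Suc b)) (dl b) ((b+1) * (Ms b + Lb b + 1))"
  unfolding dl_def TMs_Suc Rs_Suc unfolding Ms_def Lb_def blk_def Zb_def Ab_def TMs_def Rs_def by (simp add: Let_def)
lemma Rs0: "Rs 0 = 0" and Ms0: "Ms 0 = 0" and TMs0: "TMs 0 = 0"
  unfolding Rs_def Ms_def TMs_def by simp_all

lemma blk_spec: "Bspec b (Rs b + b + YB b) (Ms b) (Ab b, Zb b, Lb b)"
  using chooseB[of b "Rs b + b + YB b" "Ms b"] unfolding Ab_def Zb_def Lb_def blk_def by simp

lemma Zb_fin: "finite (Zb b)" using blk_spec[of b] unfolding Bspec_def by simp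
lemma Ab_nonneg: "Ab b m \<ge> 0" using blk_spec[of b] unfolding Bspec_def by simp
lemma Zb_avoid: "m \<in> Zb b \<Longrightarrow> nat \<bar>m\<bar> > Rs b + b + YB b"
  using blk_spec[of b] unfolding Bspec_def by (auto simp: disjoint_iff)
lemma Om_blk_early: "j \<le> Ms b \<Longrightarrow> Om (Ab b) (Zb b) j \<le> (1/2)^b"
  using blk_spec[of b] unfolding Bspec_def by simp
lemma Om_blk0: "Om (Ab b) (Zb b) 0 \<le> (1/2)^b" using Om_blk_early[of 0 b] by simp
lemma Lb_ge: "Lb b \<ge> Ms b + b + 1" using blk_spec[of b] unfolding Bspec_def by simp
lemma Lb_cnt: "real (card {j\<in>{1..Lb b}. Om (Ab b) (Zb b) j \<ge> 1}) \<ge> (1 - 1/(real b + 1)) * real (Lb b)"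
  using blk_spec[of b] unfolding Bspec_def by simp

lemma TMs_nonneg: "TMs b \<ge> 0"
proof (induction b)
  case 0 then show ?case by (simp add: TMs0)
next
  case (Suc b) then show ?case unfolding TMs_Suc using Ab_nonneg by (simp add: sum_nonneg)
qed

lemma TMs_sum: "TMs b = (\<Sum>c<b. sum (Ab c) (Zb c))"
  by (induction b) (simp_all add: TMs0 TMs_Suc)

lemma dl_pos: "dl b > 0" unfolding dl_def using TMs_nonneg[of "Suc b"] by simp

lemma Ms_spec: "Mspec b (Rs (Suc b)) (dl b) ((b+1) * (Ms b + Lb b + 1)) (Ms (Suc b))"
  unfolding Ms_Suc by (rule chooseM[OF dl_pos])

lemma Ms_Suc_ge: "Ms (Suc b) \<ge> (b+1) * (Ms b + Lb b + 1)" using Ms_spec[of b] unfolding Mspec_def by simp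
lemma Ms_cnt: "real (card (Gset (Rs (Suc b)) (dl b) \<inter> {1..Ms (Suc b)})) \<ge> (1 - 1/(real b + 1)) * real (Ms (Suc b))"
  using Ms_spec[of b] unfolding Mspec_def by simp

lemma Ms_step: "Ms b \<le> Ms (Suc b)"
proof -
  have "Ms b \<le> Ms b + Lb b + 1" by simp
  also have "\<dots> \<le> (b+1) * (Ms b + Lb b + 1)" by simp
  also have "\<dots> \<le> Ms (Suc b)" by (rule Ms_Suc_ge)
  finally show ?thesis .
qed
lemma Ms_mono: "b \<le> b' \<Longrightarrow> Ms b \<le> Ms b'"
  by (induction b' rule: dec_induct) (auto intro: order_trans Ms_step)
lemma Rs_step: "Rs b \<le> Rs (Suc b)" unfolding Rs_Suc by simp
lemma Rs_mono: "b \<le> b' \<Longrightarrow> Rs b \<le> Rs b'"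
  by (induction b' rule: dec_induct) (auto intro: order_trans Rs_step)

lemma Zb_bound: "m \<in> Zb c \<Longrightarrow> nat \<bar>m\<bar> \<le> Rs (Suc c)"
proof -
  assume "m \<in> Zb c"
  hence "nat \<bar>m\<bar> \<le> bnd (Zb c)" using Zb_fin by (intro bnd_ge)
  thus ?thesis unfolding Rs_Suc by simp
qed

lemma Zb_disj: "c \<noteq> b \<Longrightarrow> Zb c \<inter> Zb b = {}"
proof -
  { fix c b m assume "c < b" "m \<in> Zb c" "m \<in> Zb b"
    hence "nat \<bar>m\<bar> \<le> Rs (Suc c)" by (intro Zb_bound)
    also have "\<dots> \<le> Rs b" using \<open>c < b\<close> by (intro Rs_mono) simp
    finally have False using Zb_avoid[OF \<open>m \<in> Zb b\<close>] by simp }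
  thus "c \<noteq> b \<Longrightarrow> Zb c \<inter> Zb b = {}" by (metis disjoint_iff linorder_neqE_nat)
qed

lemma Zb_gt: "m \<in> Zb b \<Longrightarrow> nat \<bar>m\<bar> > b" using Zb_avoid by fastforce
lemma Zb_yv: "m \<in> Zb b \<Longrightarrow> q \<le> b \<Longrightarrow> yv q m = 0"
  using Zb_avoid yv_supp by fastforce

lemma Om_blk_pow: "Om (Ab c) (Zb c) j \<le> C ^ j * (1/2)^c"
proof -
  have "Om (Ab c) (Zb c) j \<le> C ^ j * Om (Ab c) (Zb c) 0" by (intro Om_pow Ab_nonneg)
  also have "\<dots> \<le> C ^ j * (1/2)^c" using C1 Om_blk0 by (intro mult_left_mono) auto
  finally show ?thesis .
qed

lemma Om_blk_nonneg: "Om (Ab c) (Zb c) j \<ge> 0" by (intro Om_nonneg Ab_nonneg)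

end

context wsh_c begin

definition wm :: "(nat \<Rightarrow> bool) \<Rightarrow> int \<Rightarrow> real" where
  "wm I m = (if \<exists>b. I b \<and> m \<in> Zb b then Ab (SOME b. m \<in> Zb b) m else 0)"

lemma some_blk: "m \<in> Zb b \<Longrightarrow> (SOME b. m \<in> Zb b) = b"
proof -
  assume h: "m \<in> Zb b"
  hence "m \<in> Zb (SOME b. m \<in> Zb b)" by (rule someI)
  thus ?thesis using h Zb_disj[of "SOME b. m \<in> Zb b" b] by auto
qed

lemma wm_nonneg: "wm I m \<ge> 0" unfolding wm_def using Ab_nonneg by simp

lemma wm_on_blk: "m \<in> Zb b \<Longrightarrow> wm I m = (if I b then Ab b m else 0)"
proof -
  assume h: "m \<in> Zb b"
  have u: "c = b" if "m \<in> Zb c" for c using h that Zb_disj[of c b] by auto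
  show ?thesis
  proof (cases "I b")
    case True
    thus ?thesis unfolding wm_def using h some_blk[OF h] by auto
  next
    case False
    hence "\<not> (\<exists>c. I c \<and> m \<in> Zb c)" using u by auto
    thus ?thesis unfolding wm_def using False by auto
  qed
qed

lemma wm_False: "wm (\<lambda>_. False) m = 0" unfolding wm_def by simp

lemma wm_sum_le:
  assumes fF: "finite F" and Fb: "\<And>m. m \<in> F \<Longrightarrow> nat \<bar>m\<bar> \<le> K"
  shows "(\<Sum>m\<in>F. wm I m * v (m + int j)) \<le> (\<Sum>c\<in>{c. c < K \<and> I c}. Om (Ab c) (Zb c) j)"
proof -
  let ?CK = "{c. c < K \<and> I c}"
  have fCK: "finite ?CK" by simp
  have pt: "wm I m * v (m + int j) = (\<Sum>c\<in>?CK. if m \<in> Zb c then Ab c m * v (m + int j) else 0)" if "m \<in> F" for m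
  proof (cases "\<exists>b. I b \<and> m \<in> Zb b")
    case True
    then obtain b where b: "I b" "m \<in> Zb b" by blast
    have "b < K" using Zb_gt[OF b(2)] Fb[OF that] by simp
    have "(\<Sum>c\<in>?CK. if m \<in> Zb c then Ab c m * v (m + int j) else 0) = (\<Sum>c\<in>?CK. if c = b then Ab b m * v (m + int j) else 0)"
    proof (intro sum.cong refl)
      fix c assume "c \<in> ?CK"
      show "(if m \<in> Zb c then Ab c m * v (m + int j) else 0) = (if c = b then Ab b m * v (m + int j) else 0)"
        using b(2) Zb_disj[of c b] by auto
    qed
    also have "\<dots> = Ab b m * v (m + int j)" using b(1) \<open>b < K\<close> fCK by simp
    finally show ?thesis using wm_on_blk[OF b(2)] b(1) by simp
  next
    case False
    hence "wm I m = 0" unfolding wm_def by auto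
    moreover have "(\<Sum>c\<in>?CK. if m \<in> Zb c then Ab c m * v (m + int j) else 0) = 0"
      using False by (intro sum.neutral) auto
    ultimately show ?thesis by simp
  qed
  have "(\<Sum>m\<in>F. wm I m * v (m + int j)) = (\<Sum>m\<in>F. \<Sum>c\<in>?CK. if m \<in> Zb c then Ab c m * v (m + int j) else 0)"
    using pt by (rule sum.cong[OF refl])
  also have "\<dots> = (\<Sum>c\<in>?CK. \<Sum>m\<in>F. if m \<in> Zb c then Ab c m * v (m + int j) else 0)" by (rule sum.swap)
  also have "\<dots> = (\<Sum>c\<in>?CK. \<Sum>m\<in>F \<inter> Zb c. Ab c m * v (m + int j))"
    by (simp add: sum.inter_restrict[OF fF])
  also have "\<dots> \<le> (\<Sum>c\<in>?CK. Om (Ab c) (Zb c) j)"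
    unfolding Om_def using Zb_fin Ab_nonneg vpos
    by (intro sum_mono sum_mono2) (auto simp: less_imp_le)
  finally show ?thesis .
qed

lemma wm_blk_sum: "I b \<Longrightarrow> (\<Sum>m\<in>Zb b. wm I m * v (m + int j)) = Om (Ab b) (Zb b) j"
  unfolding Om_def by (intro sum.cong) (auto simp: wm_on_blk)

lemma sum_Om_pow: "(\<Sum>c\<in>{c. c < K \<and> I c}. Om (Ab c) (Zb c) j) \<le> 2 * C ^ j"
proof -
  have "(\<Sum>c\<in>{c. c < K \<and> I c}. Om (Ab c) (Zb c) j) \<le> (\<Sum>c\<in>{c. c < K \<and> 0 \<le> c}. Om (Ab c) (Zb c) j)"
    using Om_blk_nonneg by (intro sum_mono2) auto
  also have "\<dots> \<le> (\<Sum>c\<in>{c. c < K \<and> 0 \<le> c}. C ^ j * (1/2)^c)" by (intro sum_mono Om_blk_pow)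
  also have "\<dots> = C ^ j * (\<Sum>c\<in>{c. c < K \<and> 0 \<le> c}. (1/2::real)^c)" by (simp add: sum_distrib_left)
  also have "\<dots> \<le> C ^ j * (2 * (1/2)^0)" using C1 by (intro mult_left_mono geom_tail) auto
  finally show ?thesis by simp
qed

lemma sum_Om_tail: "(\<And>c. I c \<Longrightarrow> q \<le> c) \<Longrightarrow> (\<Sum>c\<in>{c. c < K \<and> I c}. Om (Ab c) (Zb c) 0) \<le> 2 * (1/2)^q"
proof -
  assume h: "\<And>c. I c \<Longrightarrow> q \<le> c"
  have "(\<Sum>c\<in>{c. c < K \<and> I c}. Om (Ab c) (Zb c) 0) \<le> (\<Sum>c\<in>{c. c < K \<and> q \<le> c}. Om (Ab c) (Zb c) 0)"
    using Om_blk_nonneg h by (intro sum_mono2) auto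
  also have "\<dots> \<le> (\<Sum>c\<in>{c. c < K \<and> q \<le> c}. (1/2::real)^c)" by (intro sum_mono Om_blk0)
  also have "\<dots> \<le> 2 * (1/2)^q" by (rule geom_tail)
  finally show ?thesis .
qed

lemma stage_bound:
  assumes j1: "Ms b < j" and j2: "j \<le> Ms (Suc b)" and jG: "j \<in> Gset (Rs (Suc b)) (dl b)"
  shows "(\<Sum>c\<in>{c. c < K \<and> I c}. Om (Ab c) (Zb c) j) \<le> 2 * (1/2)^b"
proof -
  let ?S = "{c. c < K \<and> I c}"
  have split: "(\<Sum>c\<in>?S. Om (Ab c) (Zb c) j) = (\<Sum>c\<in>?S \<inter> {..b}. Om (Ab c) (Zb c) j) + (\<Sum>c\<in>?S - {..b}. Om (Ab c) (Zb c) j)"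
    by (rule sum.Int_Diff) simp
  have early: "Om (Ab c) (Zb c) j \<le> dl b * sum (Ab c) (Zb c)" if "c \<le> b" for c
  proof -
    have "Om (Ab c) (Zb c) j \<le> (\<Sum>m\<in>Zb c. Ab c m * dl b)"
      unfolding Om_def
    proof (intro sum_mono mult_left_mono)
      fix m assume m: "m \<in> Zb c"
      have "nat \<bar>m\<bar> \<le> Rs (Suc c)" by (rule Zb_bound[OF m])
      also have "\<dots> \<le> Rs (Suc b)" using that by (intro Rs_mono) simp
      finally have "\<bar>m\<bar> \<le> int (Rs (Suc b))" by simp
      thus "v (m + int j) \<le> dl b" using jG unfolding Gset_def by (auto intro: less_imp_le)
    qed (rule Ab_nonneg)
    also have "\<dots> = dl b * sum (Ab c) (Zb c)" by (simp add: sum_distrib_left mult.commute)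
    finally show ?thesis .
  qed
  have "(\<Sum>c\<in>?S \<inter> {..b}. Om (Ab c) (Zb c) j) \<le> (\<Sum>c\<in>{..b}. Om (Ab c) (Zb c) j)"
    using Om_blk_nonneg by (intro sum_mono2) auto
  also have "\<dots> \<le> (\<Sum>c\<in>{..b}. dl b * sum (Ab c) (Zb c))" using early by (intro sum_mono) auto
  also have "\<dots> = dl b * TMs (Suc b)" unfolding TMs_sum by (simp add: sum_distrib_left lessThan_Suc_atMost)
  also have "\<dots> \<le> (1/2)^b"
  proof -
    have t: "TMs (Suc b) \<ge> 0" by (rule TMs_nonneg)
    have "dl b * TMs (Suc b) = (1/2)^b * (TMs (Suc b) / (1 + TMs (Suc b)))" unfolding dl_def by simp
    also have "TMs (Suc b) / (1 + TMs (Suc b)) \<le> 1" using t by simp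
    hence "(1/2::real)^b * (TMs (Suc b) / (1 + TMs (Suc b))) \<le> (1/2)^b * 1" by (intro mult_left_mono) auto
    finally show ?thesis by simp
  qed
  finally have A: "(\<Sum>c\<in>?S \<inter> {..b}. Om (Ab c) (Zb c) j) \<le> (1/2)^b" .
  have "(\<Sum>c\<in>?S - {..b}. Om (Ab c) (Zb c) j) \<le> (\<Sum>c\<in>?S - {..b}. (1/2::real)^c)"
  proof (intro sum_mono Om_blk_early)
    fix c assume "c \<in> ?S - {..b}"
    hence "Suc b \<le> c" by auto
    hence "Ms (Suc b) \<le> Ms c" by (rule Ms_mono)
    thus "j \<le> Ms c" using j2 by simp
  qed
  also have "\<dots> \<le> (\<Sum>c\<in>{c. c < K \<and> Suc b \<le> c}. (1/2::real)^c)" by (intro sum_mono2) auto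
  also have "\<dots> \<le> 2 * (1/2)^(Suc b)" by (rule geom_tail)
  also have "\<dots> = (1/2)^b" by simp
  finally have B: "(\<Sum>c\<in>?S - {..b}. Om (Ab c) (Zb c) j) \<le> (1/2)^b" .
  show ?thesis using split A B by simp
qed

definition Aset :: "nat set" where
  "Aset = {j. \<exists>b. Ms b < j \<and> j \<le> Ms (Suc b) \<and> j \<in> Gset (Rs (Suc b)) (dl b)}"

lemma Aset_UD1: "UD1 Aset"
  unfolding UD1_def
proof (intro allI impI)
  fix \<theta> :: real and M :: nat assume th: "\<theta> > 0"
  define b where "b = max M (nat \<lceil>2 / \<theta>\<rceil>)"
  define N where "N = Ms (Suc b)"
  have Nge: "N \<ge> (b+1) * (Ms b + Lb b + 1)" unfolding N_def by (rule Ms_Suc_ge)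
  have "b + 1 \<le> (b+1) * (Ms b + Lb b + 1)" using mult_le_mono2[of 1 "Ms b + Lb b + 1" "b+1"] by simp
  hence Nb: "N \<ge> b + 1" using Nge by linarith
  have NM: "N \<ge> M" using Nb unfolding b_def by simp
  have Msb: "real (b+1) * real (Ms b) \<le> real N"
  proof -
    have "(b+1) * Ms b \<le> (b+1) * (Ms b + Lb b + 1)" by (intro mult_le_mono2) simp
    hence "(b+1) * Ms b \<le> N" using Nge by linarith
    hence "real ((b+1) * Ms b) \<le> real N" by (simp only: of_nat_le_iff)
    thus ?thesis by (simp add: algebra_simps)
  qed
  let ?G = "Gset (Rs (Suc b)) (dl b)"
  have sub: "?G \<inter> {1..N} \<subseteq> (Aset \<inter> {1..N}) \<union> {1..Ms b}"
  proof
    fix x assume x: "x \<in> ?G \<inter> {1..N}"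
    show "x \<in> (Aset \<inter> {1..N}) \<union> {1..Ms b}"
    proof (cases "x \<le> Ms b")
      case False
      hence "x \<in> Aset" using x unfolding Aset_def N_def by (intro CollectI exI[of _ b]) auto
      thus ?thesis using x by auto
    qed (use x in auto)
  qed
  have "card (?G \<inter> {1..N}) \<le> card ((Aset \<inter> {1..N}) \<union> {1..Ms b})" by (intro card_mono[OF _ sub]) auto
  also have "\<dots> \<le> card (Aset \<inter> {1..N}) + card {1..Ms b}" by (rule card_Un_le)
  finally have c1: "real (card (?G \<inter> {1..N})) \<le> real (card (Aset \<inter> {1..N})) + real (Ms b)" by simp
  have c2: "real (card (?G \<inter> {1..N})) \<ge> (1 - 1/(real b + 1)) * real N" using Ms_cnt[of b] unfolding N_def .
  have bth: "real b + 1 \<ge> 2 / \<theta>" unfolding b_def by linarith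
  have "2 / (real b + 1) \<le> \<theta>" using bth th by (simp add: divide_simps mult.commute)
  hence "(1 - \<theta>) * real N \<le> (1 - 2/(real b + 1)) * real N" by (intro mult_right_mono) auto
  also have "\<dots> = (1 - 1/(real b + 1)) * real N - real N / (real b + 1)" by (simp add: algebra_simps)
  also have "real N / (real b + 1) \<ge> real (Ms b)" using Msb by (simp add: divide_simps algebra_simps)
  hence "(1 - 1/(real b + 1)) * real N - real N / (real b + 1) \<le> real (card (Aset \<inter> {1..N}))"
    using c1 c2 by linarith
  finally have "(1 - \<theta>) * real N \<le> real (card (Aset \<inter> {1..N}))" .
  moreover have "N > 0" using Nb by simp
  ultimately show "\<exists>N\<ge>M. N > 0 \<and> real (card (Aset \<inter> {1..N})) \<ge> (1 - \<theta>) * real N" using NM by blast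
qed

end

context wsh begin

lemma rat_approx1:
  assumes e: "\<epsilon> > 0"
  shows "\<exists>r::rat. \<bar>x - real_of_rat r\<bar> powr p * v m \<le> \<epsilon>"
proof -
  define \<zeta> where "\<zeta> = (\<epsilon> / v m) powr (1/p)"
  have z: "\<zeta> > 0" unfolding \<zeta>_def using e vpos[of m] by simp
  obtain r :: rat where r: "x - \<zeta> < of_rat r" "of_rat r < x + \<zeta>"
    using of_rat_dense[of "x - \<zeta>" "x + \<zeta>"] z by auto
  have "\<bar>x - of_rat r\<bar> < \<zeta>" using r by auto
  hence "\<bar>x - of_rat r\<bar> powr p \<le> \<zeta> powr p" using ppos by (intro powr_mono2) auto
  also have "\<zeta> powr p = \<epsilon> / v m" unfolding \<zeta>_def using e vpos[of m] ppos by (simp add: powr_powr)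
  finally have "\<bar>x - of_rat r\<bar> powr p * v m \<le> \<epsilon> / v m * v m" using vpos[of m] by (intro mult_right_mono) auto
  thus ?thesis using vpos[of m] by (intro exI[of _ r]) simp
qed

lemma approx:
  assumes x: "x \<in> lpw p v" and e: "\<eta> > 0"
  shows "\<exists>l. \<forall>F. finite F \<longrightarrow> (\<Sum>m\<in>F. \<bar>x m - yvl l m\<bar> powr p * v m) \<le> \<eta>"
proof -
  define f where "f m = \<bar>x m\<bar> powr p * v m" for m
  have sf: "f summable_on UNIV" using x unfolding lpw_def f_def by simp
  have f0: "f m \<ge> 0" for m unfolding f_def using vpos by (simp add: less_imp_le)
  define S where "S = infsum f UNIV"
  have Ssup: "S = (SUP F\<in>{F. finite F \<and> F \<subseteq> UNIV}. sum f F)"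
    unfolding S_def using sf f0 by (intro infsum_nonneg_is_SUPREMUM_real) auto
  have bdd: "bdd_above (sum f ` {F. finite F \<and> F \<subseteq> UNIV})"
    using sf f0 unfolding S_def by (intro bdd_aboveI2[of _ _ "infsum f UNIV"] finite_sum_le_infsum) auto
  have "S - \<eta>/2 < S" using e by simp
  then obtain F0 where F0: "finite F0" "sum f F0 > S - \<eta>/2"
    unfolding Ssup using less_cSUP_iff[OF _ bdd] by (metis (no_types, lifting) empty_iff finite.emptyI mem_Collect_eq subset_UNIV)
  have tail: "sum f G \<le> \<eta>/2" if "finite G" "G \<inter> F0 = {}" for G
  proof -
    have "sum f (F0 \<union> G) \<le> S" unfolding S_def using sf f0 that F0 by (intro finite_sum_le_infsum) auto
    moreover have "sum f (F0 \<union> G) = sum f F0 + sum f G" using that F0 by (intro sum.union_disjoint) auto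
    ultimately show ?thesis using F0 by linarith
  qed
  define \<epsilon>' where "\<epsilon>' = \<eta> / (2 * (real (card F0) + 1))"
  have e': "\<epsilon>' > 0" unfolding \<epsilon>'_def using e by simp
  define rr where "rr m = (SOME r::rat. \<bar>x m - real_of_rat r\<bar> powr p * v m \<le> \<epsilon>')" for m
  have rr: "\<bar>x m - real_of_rat (rr m)\<bar> powr p * v m \<le> \<epsilon>'" for m
    unfolding rr_def using rat_approx1[OF e', of "x m" m] by (rule someI_ex)
  define l where "l = map (\<lambda>m. (m, rr m)) (sorted_list_of_set F0)"
  have yl: "yvl l m = (if m \<in> F0 then real_of_rat (rr m) else 0)" for m
    unfolding yvl_def l_def map_of_map_restrict using F0(1) by (auto simp: restrict_map_def)
  show ?thesis
  proof (intro exI[of _ l] allI impI)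
    fix F :: "int set" assume fF: "finite F"
    let ?g = "\<lambda>m. \<bar>x m - yvl l m\<bar> powr p * v m"
    have "sum ?g F = sum ?g (F \<inter> F0) + sum ?g (F - F0)" using fF by (rule sum.Int_Diff)
    also have "sum ?g (F \<inter> F0) \<le> sum (\<lambda>_. \<epsilon>') (F \<inter> F0)"
      by (intro sum_mono) (use rr yl in auto)
    also have "\<dots> = real (card (F \<inter> F0)) * \<epsilon>'" by simp
    also have "\<dots> \<le> real (card F0) * \<epsilon>'" using e' F0(1) by (intro mult_right_mono) (auto intro: card_mono)
    also have "\<dots> \<le> \<eta>/2"
    proof -
      have "real (card F0) * \<epsilon>' = \<eta>/2 * (real (card F0) / (real (card F0) + 1))" unfolding \<epsilon>'_def by simp
      also have "\<dots> \<le> \<eta>/2 * 1" using e by (intro mult_left_mono) auto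
      finally show ?thesis by simp
    qed
    also have "sum ?g (F - F0) = sum f (F - F0)" unfolding f_def using yl by (intro sum.cong) auto
    also have "\<dots> \<le> \<eta>/2" using fF by (intro tail) auto
    finally show "sum ?g F \<le> \<eta>" by simp
  qed
qed

lemma supp_sum:
  assumes "\<And>m. d m \<noteq> 0 \<Longrightarrow> nat \<bar>m\<bar> \<le> Kd" "finite F"
  shows "(\<Sum>m\<in>F. \<bar>d m\<bar> powr p * v (m + int j)) \<le> (\<Sum>m\<in>{- int Kd..int Kd}. \<bar>d m\<bar> powr p * v (m + int j))"
proof -
  have "(\<Sum>m\<in>F. \<bar>d m\<bar> powr p * v (m + int j)) = (\<Sum>m\<in>F \<inter> {- int Kd..int Kd}. \<bar>d m\<bar> powr p * v (m + int j))"
  proof (rule sum.mono_neutral_right)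
    show "\<forall>i\<in>F - F \<inter> {- int Kd..int Kd}. \<bar>d i\<bar> powr p * v (i + int j) = 0"
    proof
      fix i assume "i \<in> F - F \<inter> {- int Kd..int Kd}"
      hence "\<not> nat \<bar>i\<bar> \<le> Kd" by auto
      hence "d i = 0" using assms(1) by blast
      thus "\<bar>d i\<bar> powr p * v (i + int j) = 0" by simp
    qed
  qed (use assms(2) in auto)
  also have "\<dots> \<le> (\<Sum>m\<in>{- int Kd..int Kd}. \<bar>d m\<bar> powr p * v (m + int j))"
    by (intro sum_mono2) (auto intro: term_nonneg)
  finally show ?thesis .
qed

end

context wsh_c begin

lemma PS:
  assumes fF: "finite F"
  shows "(\<Sum>m\<in>F. \<bar>a m + wm I1 m powr (1/p) - wm I2 m powr (1/p)\<bar> powr p * v (m + int j))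
     \<le> 3 powr p * ((\<Sum>m\<in>F. \<bar>a m\<bar> powr p * v (m + int j)) + (\<Sum>c\<in>{c. c < bnd F \<and> I1 c}. Om (Ab c) (Zb c) j)
          + (\<Sum>c\<in>{c. c < bnd F \<and> I2 c}. Om (Ab c) (Zb c) j))"
proof -
  have pt: "\<bar>a m + wm I1 m powr (1/p) - wm I2 m powr (1/p)\<bar> powr p * v (m + int j)
      \<le> 3 powr p * (\<bar>a m\<bar> powr p * v (m + int j) + wm I1 m * v (m + int j) + wm I2 m * v (m + int j))" for m
  proof -
    have "\<bar>a m + wm I1 m powr (1/p) - wm I2 m powr (1/p)\<bar> powr p
        \<le> 3 powr p * (\<bar>a m\<bar> powr p + \<bar>wm I1 m powr (1/p)\<bar> powr p + \<bar>wm I2 m powr (1/p)\<bar> powr p)"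
    proof (intro pow3)
      have w1: "wm I1 m powr (1/p) \<ge> 0" and w2: "wm I2 m powr (1/p) \<ge> 0" by simp_all
      show "\<bar>a m + wm I1 m powr (1/p) - wm I2 m powr (1/p)\<bar> \<le> \<bar>a m\<bar> + \<bar>wm I1 m powr (1/p)\<bar> + \<bar>wm I2 m powr (1/p)\<bar>"
        using abs_ge_self[of "a m"] abs_ge_minus_self[of "a m"] w1 w2 unfolding abs_le_iff by (intro conjI; linarith)
    qed simp
    also have "\<dots> = 3 powr p * (\<bar>a m\<bar> powr p + wm I1 m + wm I2 m)"
      using wm_nonneg[of I1 m] wm_nonneg[of I2 m] ppos by (simp add: powr_powr)
    finally have h: "\<bar>a m + wm I1 m powr (1/p) - wm I2 m powr (1/p)\<bar> powr p \<le> 3 powr p * (\<bar>a m\<bar> powr p + wm I1 m + wm I2 m)" .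
    have "\<bar>a m + wm I1 m powr (1/p) - wm I2 m powr (1/p)\<bar> powr p * v (m + int j) \<le> 3 powr p * (\<bar>a m\<bar> powr p + wm I1 m + wm I2 m) * v (m + int j)"
      by (rule mult_right_mono[OF h]) (use vpos[of "m + int j"] in simp)
    thus ?thesis by (simp add: algebra_simps)
  qed
  have "(\<Sum>m\<in>F. \<bar>a m + wm I1 m powr (1/p) - wm I2 m powr (1/p)\<bar> powr p * v (m + int j))
      \<le> (\<Sum>m\<in>F. 3 powr p * (\<bar>a m\<bar> powr p * v (m + int j) + wm I1 m * v (m + int j) + wm I2 m * v (m + int j)))"
    by (intro sum_mono pt)
  also have "\<dots> = 3 powr p * ((\<Sum>m\<in>F. \<bar>a m\<bar> powr p * v (m + int j)) + (\<Sum>m\<in>F. wm I1 m * v (m + int j)) + (\<Sum>m\<in>F. wm I2 m * v (m + int j)))"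
    by (simp only: sum_distrib_left[symmetric] sum.distrib)
  also have "\<dots> \<le> 3 powr p * ((\<Sum>m\<in>F. \<bar>a m\<bar> powr p * v (m + int j)) + (\<Sum>c\<in>{c. c < bnd F \<and> I1 c}. Om (Ab c) (Zb c) j)
          + (\<Sum>c\<in>{c. c < bnd F \<and> I2 c}. Om (Ab c) (Zb c) j))"
    using wm_sum_le[OF fF, of "bnd F" I1 j] wm_sum_le[OF fF, of "bnd F" I2 j] bnd_ge[OF fF]
    by (intro mult_left_mono add_mono) auto
  finally show ?thesis .
qed

definition Iv :: "nat \<Rightarrow> (nat \<Rightarrow> bool) \<Rightarrow> nat \<Rightarrow> bool" where
  "Iv q \<sigma> c \<longleftrightarrow> oq c = q \<and> \<sigma> (ok c)"

definition gam :: "nat \<Rightarrow> (nat \<Rightarrow> bool) \<Rightarrow> int \<Rightarrow> real" where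
  "gam q \<sigma> = (\<lambda>m. yv q m + wm (Iv q \<sigma>) m powr (1/p))"

definition Gam :: "(int \<Rightarrow> real) set" where
  "Gam = {gam q \<sigma> | q \<sigma>. \<sigma> 0}"

lemma gam_form: "gam q \<sigma> m = yv q m + wm (Iv q \<sigma>) m powr (1/p) - wm (\<lambda>_. False) m powr (1/p)"
  unfolding gam_def by (simp add: wm_False)

lemma diff_form: "gam q \<sigma> m - gam q' \<sigma>' m = (yv q m - yv q' m) + wm (Iv q \<sigma>) m powr (1/p) - wm (Iv q' \<sigma>') m powr (1/p)"
  unfolding gam_def by simp

lemma yv_diff_supp: "yv q m - yv q' m \<noteq> 0 \<Longrightarrow> nat \<bar>m\<bar> \<le> YB (max q q')"
  using yv_supp[of q m "max q q'"] yv_supp[of q' m "max q q'"] by fastforce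

lemma gam_lpw: "gam q \<sigma> \<in> lpw p v"
proof -
  let ?D = "(\<Sum>m\<in>{- int (YB q)..int (YB q)}. \<bar>yv q m\<bar> powr p * v (m + int 0))"
  have "(\<lambda>m. \<bar>gam q \<sigma> m\<bar> powr p * v (m + int 0)) summable_on UNIV"
  proof (rule Psi_le(1))
    fix F :: "int set" assume fF: "finite F"
    have "(\<Sum>m\<in>F. \<bar>gam q \<sigma> m\<bar> powr p * v (m + int 0))
       \<le> 3 powr p * ((\<Sum>m\<in>F. \<bar>yv q m\<bar> powr p * v (m + int 0)) + (\<Sum>c\<in>{c. c < bnd F \<and> Iv q \<sigma> c}. Om (Ab c) (Zb c) 0)
          + (\<Sum>c\<in>{c. c < bnd F \<and> False}. Om (Ab c) (Zb c) 0))"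
      unfolding gam_form by (rule PS[OF fF])
    also have "\<dots> \<le> 3 powr p * (?D + 2 * C ^ 0 + 2 * C ^ 0)"
      using supp_sum[of "yv q" "YB q" F 0] yv_supp[of q _ q] fF sum_Om_pow[where K="bnd F" and I="Iv q \<sigma>" and j=0]
        sum_Om_pow[where K="bnd F" and I="\<lambda>_. False" and j=0]
      by (intro mult_left_mono add_mono) auto
    finally show "(\<Sum>m\<in>F. \<bar>gam q \<sigma> m\<bar> powr p * v (m + int 0)) \<le> 3 powr p * (?D + 2 * C ^ 0 + 2 * C ^ 0)" .
  qed
  thus ?thesis unfolding lpw_def by simp
qed

lemma diff_summable: "(\<lambda>m. \<bar>gam q \<sigma> m - gam q' \<sigma>' m\<bar> powr p * v (m + int j)) summable_on UNIV"
proof (rule Psi_le(1))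
  let ?K = "YB (max q q')"
  let ?D = "(\<Sum>m\<in>{- int ?K..int ?K}. \<bar>yv q m - yv q' m\<bar> powr p * v (m + int j))"
  fix F :: "int set" assume fF: "finite F"
  have "(\<Sum>m\<in>F. \<bar>gam q \<sigma> m - gam q' \<sigma>' m\<bar> powr p * v (m + int j))
       \<le> 3 powr p * ((\<Sum>m\<in>F. \<bar>yv q m - yv q' m\<bar> powr p * v (m + int j)) + (\<Sum>c\<in>{c. c < bnd F \<and> Iv q \<sigma> c}. Om (Ab c) (Zb c) j)
          + (\<Sum>c\<in>{c. c < bnd F \<and> Iv q' \<sigma>' c}. Om (Ab c) (Zb c) j))"
    unfolding diff_form by (rule PS[OF fF])
  also have "\<dots> \<le> 3 powr p * (?D + 2 * C ^ j + 2 * C ^ j)"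
    using supp_sum[of "\<lambda>m. yv q m - yv q' m" ?K F j] yv_diff_supp fF sum_Om_pow[where K="bnd F" and I="Iv q \<sigma>" and j=j]
      sum_Om_pow[where K="bnd F" and I="Iv q' \<sigma>'" and j=j]
    by (intro mult_left_mono add_mono) auto
  finally show "(\<Sum>m\<in>F. \<bar>gam q \<sigma> m - gam q' \<sigma>' m\<bar> powr p * v (m + int j)) \<le> 3 powr p * (?D + 2 * C ^ j + 2 * C ^ j)" .
qed

end

lemma unc_sig: "uncountable {\<sigma> :: nat \<Rightarrow> bool. \<sigma> 0}"
proof
  assume cS: "countable {\<sigma> :: nat \<Rightarrow> bool. \<sigma> 0}"
  let ?S = "{\<sigma> :: nat \<Rightarrow> bool. \<sigma> 0}"
  let ?g = "from_nat_into ?S"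
  define s where "s n = (if n = 0 then True else \<not> ?g (n - 1) n)" for n
  have "s \<in> ?S" unfolding s_def by simp
  then obtain k where k: "?g k = s" using from_nat_into_surj[OF cS] by blast
  have "s (Suc k) = (\<not> ?g k (Suc k))" unfolding s_def by simp
  also have "\<dots> = (\<not> s (Suc k))" using k by simp
  finally show False by simp
qed

context wsh_c begin

lemma LD0_gen:
  assumes summ: "\<And>j. (\<lambda>m. \<bar>x m\<bar> powr p * v (m + int j)) summable_on UNIV"
    and inf: "\<And>B. \<exists>b\<ge>B. \<forall>m\<in>Zb b. \<bar>x m\<bar> powr p = Ab b m"
  shows "LD0 {j. Psi x j < 1}"
  unfolding LD0_def
proof (intro allI impI)
  fix \<theta> :: real and M :: nat assume th: "\<theta> > 0"
  obtain b where b: "b \<ge> max M (nat \<lceil>1/\<theta>\<rceil>)" "\<forall>m\<in>Zb b. \<bar>x m\<bar> powr p = Ab b m" using inf by blast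
  define N where "N = Lb b"
  define Bs where "Bs = {j. 1 \<le> Om (Ab b) (Zb b) j}"
  have disj: "{j. Psi x j < 1} \<inter> Bs = {}"
  proof -
    { fix j assume j: "j \<in> Bs"
      have "Om (Ab b) (Zb b) j = (\<Sum>m\<in>Zb b. \<bar>x m\<bar> powr p * v (m + int j))"
        unfolding Om_def using b(2) by simp
      also have "\<dots> \<le> Psi x j" by (rule Psi_ge[OF summ Zb_fin])
      finally have "Psi x j \<ge> 1" using j unfolding Bs_def by simp }
    thus ?thesis by fastforce
  qed
  have c1: "card ({j. Psi x j < 1} \<inter> {1..N}) + card (Bs \<inter> {1..N}) \<le> N" by (rule card_disj_N[OF disj])
  have "Bs \<inter> {1..N} = {j\<in>{1..N}. Om (Ab b) (Zb b) j \<ge> 1}" unfolding Bs_def by auto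
  hence c2: "real (card (Bs \<inter> {1..N})) \<ge> (1 - 1/(real b + 1)) * real N" using Lb_cnt[of b] unfolding N_def by simp
  have bth: "real b + 1 \<ge> 1/\<theta>" using b(1) by linarith
  have "1/(real b + 1) \<le> \<theta>" using bth th by (simp add: divide_simps mult.commute)
  hence "1/(real b + 1) * real N \<le> \<theta> * real N" by (rule mult_right_mono) simp
  hence "real N / (real b + 1) \<le> \<theta> * real N" by simp
  moreover have "real (card ({j. Psi x j < 1} \<inter> {1..N})) \<le> real N / (real b + 1)"
    using c1 c2 by (simp add: algebra_simps)
  moreover have "N \<ge> M" "N > 0" using Lb_ge[of b] b(1) unfolding N_def by auto
  ultimately show "\<exists>N\<ge>M. N > 0 \<and> real (card ({j. Psi x j < 1} \<inter> {1..N})) \<le> \<theta> * real N" by force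
qed

lemma desig:
  assumes "Iv q \<sigma> b \<noteq> Iv q' \<sigma>' b" "q \<le> b" "q' \<le> b" "m \<in> Zb b"
  shows "\<bar>gam q \<sigma> m - gam q' \<sigma>' m\<bar> powr p = Ab b m"
proof -
  have y: "yv q m = 0" "yv q' m = 0" using Zb_yv assms by auto
  have A: "Ab b m \<ge> 0" by (rule Ab_nonneg)
  show ?thesis
  proof (cases "Iv q \<sigma> b")
    case True
    hence "gam q \<sigma> m - gam q' \<sigma>' m = Ab b m powr (1/p)"
      unfolding diff_form using y wm_on_blk[OF assms(4)] assms(1) by simp
    thus ?thesis using A ppos by (simp add: powr_powr)
  next
    case False
    hence "gam q \<sigma> m - gam q' \<sigma>' m = - (Ab b m powr (1/p))"
      unfolding diff_form using y wm_on_blk[OF assms(4)] assms(1) by simp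
    thus ?thesis using A ppos by (simp add: powr_powr)
  qed
qed

lemma LD0_pair:
  assumes "\<sigma> 0" "\<sigma>' 0" "(q, \<sigma>) \<noteq> (q', \<sigma>')"
  shows "LD0 {j. Psi (\<lambda>m. gam q \<sigma> m - gam q' \<sigma>' m) j < 1}"
proof (rule LD0_gen[OF diff_summable])
  fix B
  have "\<exists>b\<ge>B. Iv q \<sigma> b \<noteq> Iv q' \<sigma>' b \<and> q \<le> b \<and> q' \<le> b"
  proof (cases "q = q'")
    case True
    with assms(3) have "\<sigma> \<noteq> \<sigma>'" by simp
    then obtain k where k: "\<sigma> k \<noteq> \<sigma>' k" by blast
    define b where "b = prod_encode (q, prod_encode (k, B))"
    have "oq b = q" "ok b = k" unfolding b_def by (simp_all add: oq_enc ok_enc)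
    moreover have "b \<ge> B" unfolding b_def by (rule enc_ge)
    moreover have "q \<le> b" using oq_le[of b] \<open>oq b = q\<close> by simp
    ultimately show ?thesis using k True unfolding Iv_def by (intro exI[of _ b]) auto
  next
    case False
    define Q where "Q = max q q'"
    define b where "b = prod_encode (Q, prod_encode (0, B))"
    have o: "oq b = Q" "ok b = 0" unfolding b_def by (simp_all add: oq_enc ok_enc)
    moreover have "b \<ge> B" unfolding b_def by (rule enc_ge)
    moreover have "Q \<le> b" using oq_le[of b] o by simp
    moreover have "Iv q \<sigma> b \<noteq> Iv q' \<sigma>' b" unfolding Iv_def o Q_def using False assms(1,2) by auto
    ultimately show ?thesis unfolding Q_def by (intro exI[of _ b]) auto
  qed
  then obtain b where "b \<ge> B" "Iv q \<sigma> b \<noteq> Iv q' \<sigma>' b" "q \<le> b" "q' \<le> b" by blast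
  thus "\<exists>b\<ge>B. \<forall>m\<in>Zb b. \<bar>gam q \<sigma> m - gam q' \<sigma>' m\<bar> powr p = Ab b m"
    using desig by blast
qed

lemma dl_le: "dl b \<le> (1/2)^b"
  unfolding dl_def using TMs_nonneg[of "Suc b"] by (simp add: divide_simps)

lemma UD1_pair:
  assumes eta: "\<eta> > 0"
  shows "UD1 {j. Psi (\<lambda>m. gam q \<sigma> m - gam q' \<sigma>' m) j < \<eta>}"
proof -
  let ?K = "YB (max q q')"
  let ?d = "\<lambda>m. yv q m - yv q' m"
  define D where "D = (\<Sum>m\<in>{- int ?K..int ?K}. \<bar>?d m\<bar> powr p)"
  have D0: "D \<ge> 0" unfolding D_def by (intro sum_nonneg) simp
  define Cst where "Cst = 3 powr p * (D + 4)"
  have Cpos: "Cst > 0" unfolding Cst_def using D0 by simp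
  obtain n where n: "(1/2::real)^n < \<eta> / Cst" using real_arch_pow_inv[of "\<eta> / Cst" "1/2"] eta Cpos by auto
  define b0 where "b0 = max n (max q q')"
  have b0: "Cst * (1/2)^b0 < \<eta>"
  proof -
    have "(1/2::real)^b0 \<le> (1/2)^n" unfolding b0_def by (intro power_decreasing) auto
    hence "(1/2::real)^b0 < \<eta> / Cst" using n by linarith
    thus ?thesis using Cpos by (simp add: divide_simps mult.commute)
  qed
  have key: "Psi (\<lambda>m. gam q \<sigma> m - gam q' \<sigma>' m) j < \<eta>" if j: "j \<in> Aset" "j \<ge> Ms b0 + 1" for j
  proof -
    obtain b where b: "Ms b < j" "j \<le> Ms (Suc b)" "j \<in> Gset (Rs (Suc b)) (dl b)" using j(1) unfolding Aset_def by blast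
    have bb0: "b \<ge> b0"
    proof (rule ccontr)
      assume "\<not> b \<ge> b0"
      hence "Suc b \<le> b0" by simp
      hence "Ms (Suc b) \<le> Ms b0" by (rule Ms_mono)
      thus False using b(2) j(2) by simp
    qed
    have Kb: "?K \<le> Rs (Suc b)"
    proof -
      have "?K \<le> YB b" using bb0 unfolding b0_def by (intro YB_mono) simp
      thus ?thesis unfolding Rs_Suc by simp
    qed
    have dsum: "(\<Sum>m\<in>{- int ?K..int ?K}. \<bar>?d m\<bar> powr p * v (m + int j)) \<le> D * (1/2)^b"
    proof -
      have "(\<Sum>m\<in>{- int ?K..int ?K}. \<bar>?d m\<bar> powr p * v (m + int j)) \<le> (\<Sum>m\<in>{- int ?K..int ?K}. \<bar>?d m\<bar> powr p * (1/2)^b)"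
      proof (intro sum_mono mult_left_mono)
        fix m assume "m \<in> {- int ?K..int ?K}"
        hence "\<bar>m\<bar> \<le> int (Rs (Suc b))" using Kb by auto
        hence "v (m + int j) < dl b" using b(3) unfolding Gset_def by blast
        thus "v (m + int j) \<le> (1/2)^b" using dl_le[of b] by simp
      qed simp
      also have "\<dots> = D * (1/2)^b" unfolding D_def by (simp add: sum_distrib_right)
      finally show ?thesis .
    qed
    have "Psi (\<lambda>m. gam q \<sigma> m - gam q' \<sigma>' m) j \<le> 3 powr p * (D * (1/2)^b + 2 * (1/2)^b + 2 * (1/2)^b)"
    proof (rule Psi_le(2))
      fix F :: "int set" assume fF: "finite F"
      have "(\<Sum>m\<in>F. \<bar>gam q \<sigma> m - gam q' \<sigma>' m\<bar> powr p * v (m + int j))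
       \<le> 3 powr p * ((\<Sum>m\<in>F. \<bar>?d m\<bar> powr p * v (m + int j)) + (\<Sum>c\<in>{c. c < bnd F \<and> Iv q \<sigma> c}. Om (Ab c) (Zb c) j)
          + (\<Sum>c\<in>{c. c < bnd F \<and> Iv q' \<sigma>' c}. Om (Ab c) (Zb c) j))"
        unfolding diff_form by (rule PS[OF fF])
      also have "\<dots> \<le> 3 powr p * (D * (1/2)^b + 2 * (1/2)^b + 2 * (1/2)^b)"
        using supp_sum[of ?d ?K F j] yv_diff_supp fF dsum
          stage_bound[OF b, where K="bnd F" and I="Iv q \<sigma>"] stage_bound[OF b, where K="bnd F" and I="Iv q' \<sigma>'"]
        by (intro mult_left_mono add_mono) auto
      finally show "(\<Sum>m\<in>F. \<bar>gam q \<sigma> m - gam q' \<sigma>' m\<bar> powr p * v (m + int j)) \<le> 3 powr p * (D * (1/2)^b + 2 * (1/2)^b + 2 * (1/2)^b)" .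
    qed
    also have "\<dots> = Cst * (1/2)^b" unfolding Cst_def by (simp add: algebra_simps)
    also have "\<dots> \<le> Cst * (1/2)^b0" using Cpos bb0 by (intro mult_left_mono power_decreasing) auto
    also have "\<dots> < \<eta>" by (rule b0)
    finally show ?thesis .
  qed
  show ?thesis
    by (rule UD1_transfer[OF Aset_UD1, of "Ms b0 + 1" 0]) (use key in auto)
qed

lemma gam_inj:
  assumes "\<sigma> 0" "\<sigma>' 0" "gam q \<sigma> = gam q' \<sigma>'"
  shows "(q, \<sigma>) = (q', \<sigma>')"
proof (rule ccontr)
  assume ne: "(q, \<sigma>) \<noteq> (q', \<sigma>')"
  have "LD0 {j. Psi (\<lambda>m. gam q \<sigma> m - gam q' \<sigma>' m) j < 1}" by (rule LD0_pair[OF assms(1,2) ne])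
  moreover have "Psi (\<lambda>m. gam q \<sigma> m - gam q' \<sigma>' m) j = 0" for j
    unfolding Psi_def using assms(3) by simp
  ultimately have "LD0 UNIV" by simp
  then obtain N where N: "N > 0" "real (card (UNIV \<inter> {1..N})) \<le> 1/2 * real N"
    unfolding LD0_def by (metis half_gt_zero zero_less_one)
  thus False by simp
qed

lemma Gam_unc: "uncountable Gam"
proof
  assume c: "countable Gam"
  have sub: "(\<lambda>\<sigma>. gam 0 \<sigma>) ` {\<sigma>. \<sigma> 0} \<subseteq> Gam" unfolding Gam_def by blast
  have "countable ((\<lambda>\<sigma>. gam 0 \<sigma>) ` {\<sigma>. \<sigma> 0})" using countable_subset[OF sub c] .
  moreover have "inj_on (\<lambda>\<sigma>. gam 0 \<sigma>) {\<sigma>. \<sigma> 0}" using gam_inj by (auto simp: inj_on_def)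
  ultimately have "countable {\<sigma> :: nat \<Rightarrow> bool. \<sigma> 0}" by (rule countable_image_inj_on)
  thus False using unc_sig by simp
qed

lemma Gam_dense:
  assumes x: "x \<in> lpw p v" and e: "e > 0"
  shows "\<exists>y\<in>Gam. lpw_dist p v x y < e"
proof -
  define \<eta> where "\<eta> = e powr p / (4 * 3 powr p)"
  have eta: "\<eta> > 0" unfolding \<eta>_def using e by simp
  obtain l where l: "\<And>F. finite F \<Longrightarrow> (\<Sum>m\<in>F. \<bar>x m - yvl l m\<bar> powr p * v m) \<le> \<eta>"
    using approx[OF x eta] by blast
  obtain t where t: "(1/2::real)^t < \<eta>/2" using real_arch_pow_inv[of "\<eta>/2" "1/2"] eta by auto
  define q where "q = prod_encode (to_nat l, t)"
  have yq: "yv q = yvl l" unfolding yv_def yl_def q_def by simp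
  have qt: "q \<ge> t" unfolding q_def by (rule le_prod_encode_2)
  define s1 where "s1 = (\<lambda>_::nat. True)"
  have yG: "gam q s1 \<in> Gam" unfolding Gam_def s1_def by blast
  have form: "x m - gam q s1 m = (x m - yv q m) + wm (\<lambda>_. False) m powr (1/p) - wm (Iv q s1) m powr (1/p)" for m
    unfolding gam_def by (simp add: wm_False)
  have "Psi (\<lambda>m. x m - gam q s1 m) 0 \<le> 3 powr p * (\<eta> + 0 + 2 * (1/2)^q)"
  proof (rule Psi_le(2))
    fix F :: "int set" assume fF: "finite F"
    have "(\<Sum>m\<in>F. \<bar>x m - gam q s1 m\<bar> powr p * v (m + int 0))
       \<le> 3 powr p * ((\<Sum>m\<in>F. \<bar>x m - yv q m\<bar> powr p * v (m + int 0)) + (\<Sum>c\<in>{c. c < bnd F \<and> False}. Om (Ab c) (Zb c) 0)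
          + (\<Sum>c\<in>{c. c < bnd F \<and> Iv q s1 c}. Om (Ab c) (Zb c) 0))"
      unfolding form by (rule PS[OF fF])
    also have "\<dots> \<le> 3 powr p * (\<eta> + 0 + 2 * (1/2)^q)"
    proof (intro mult_left_mono add_mono)
      show "(\<Sum>m\<in>F. \<bar>x m - yv q m\<bar> powr p * v (m + int 0)) \<le> \<eta>" using l[OF fF] yq by simp
      show "(\<Sum>c\<in>{c. c < bnd F \<and> False}. Om (Ab c) (Zb c) 0) \<le> 0" by simp
      show "(\<Sum>c\<in>{c. c < bnd F \<and> Iv q s1 c}. Om (Ab c) (Zb c) 0) \<le> 2 * (1/2)^q"
        by (rule sum_Om_tail) (use oq_le in \<open>auto simp: Iv_def\<close>)
    qed simp
    finally show "(\<Sum>m\<in>F. \<bar>x m - gam q s1 m\<bar> powr p * v (m + int 0)) \<le> 3 powr p * (\<eta> + 0 + 2 * (1/2)^q)" .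
  qed
  also have "\<dots> \<le> 3 powr p * (\<eta> + \<eta>)"
  proof -
    have "(1/2::real)^q \<le> (1/2)^t" using qt by (intro power_decreasing) auto
    hence "\<eta> + 0 + 2 * (1/2::real)^q \<le> \<eta> + \<eta>" using t by linarith
    thus ?thesis by (intro mult_left_mono) auto
  qed
  also have "\<dots> = e powr p / 2" unfolding \<eta>_def by (simp add: divide_simps)
  also have "\<dots> < e powr p" using e by simp
  finally have "Psi (\<lambda>m. x m - gam q s1 m) 0 < e powr p" .
  hence "lpw_dist p v x (gam q s1) < e" unfolding dist0 by (rule powr_small[OF e])
  thus ?thesis using yG by blast
qed

theorem DDC: "dense_distr_chaotic (lpw p v) (lpw_dist p v) fwd_shift"
  unfolding dense_distr_chaotic_def dc_scrambled_def
proof (intro exI[of _ Gam] conjI)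
  show "Gam \<subseteq> lpw p v" unfolding Gam_def using gam_lpw by blast
  show "uncountable Gam" by (rule Gam_unc)
  show "\<forall>x\<in>lpw p v. \<forall>e>0. \<exists>y\<in>Gam. lpw_dist p v x y < e" using Gam_dense by blast
  show "\<exists>\<epsilon>>0. \<forall>\<delta>>0. \<forall>x\<in>Gam. \<forall>y\<in>Gam. x \<noteq> y \<longrightarrow>
        lower_dens {j. lpw_dist p v ((fwd_shift ^^ j) x) ((fwd_shift ^^ j) y) < \<epsilon>} = 0 \<and>
        upper_dens {j. lpw_dist p v ((fwd_shift ^^ j) x) ((fwd_shift ^^ j) y) < \<delta>} = 1"
  proof (intro exI[of _ 1] conjI allI impI ballI)
    fix \<delta> :: real and x y assume d: "\<delta> > 0" and xG: "x \<in> Gam" and yG: "y \<in> Gam" and ne: "x \<noteq> y"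
    obtain q \<sigma> where xq: "x = gam q \<sigma>" "\<sigma> 0" using xG unfolding Gam_def by blast
    obtain q' \<sigma>' where yq: "y = gam q' \<sigma>'" "\<sigma>' 0" using yG unfolding Gam_def by blast
    have pne: "(q, \<sigma>) \<noteq> (q', \<sigma>')" using ne xq yq by auto
    have "{j. lpw_dist p v ((fwd_shift ^^ j) x) ((fwd_shift ^^ j) y) < 1} = {j. Psi (\<lambda>m. gam q \<sigma> m - gam q' \<sigma>' m) j < 1}"
      unfolding dist_iter xq yq powr_lt1_iff ..
    thus "lower_dens {j. lpw_dist p v ((fwd_shift ^^ j) x) ((fwd_shift ^^ j) y) < 1} = 0"
      using LD0_pair[OF xq(2) yq(2) pne] lower_dens_LD0 by simp
    have "{j. Psi (\<lambda>m. gam q \<sigma> m - gam q' \<sigma>' m) j < \<delta> powr p} \<subseteq> {j. lpw_dist p v ((fwd_shift ^^ j) x) ((fwd_shift ^^ j) y) < \<delta>}"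
      unfolding dist_iter xq yq using powr_small[OF d] by blast
    moreover have "UD1 {j. Psi (\<lambda>m. gam q \<sigma> m - gam q' \<sigma>' m) j < \<delta> powr p}" using d by (intro UD1_pair) simp
    ultimately show "upper_dens {j. lpw_dist p v ((fwd_shift ^^ j) x) ((fwd_shift ^^ j) y) < \<delta>} = 1"
      using UD1_mono upper_dens_UD1 by blast
  qed simp
qed

end

lemma LD0_mono: "LD0 B \<Longrightarrow> A \<subseteq> B \<Longrightarrow> LD0 A"
  unfolding LD0_def
proof (intro allI impI)
  fix \<theta> :: real and M :: nat assume h: "\<forall>\<theta>>0. \<forall>M. \<exists>N\<ge>M. N > 0 \<and> real (card (B \<inter> {1..N})) \<le> \<theta> * real N"
    and s: "A \<subseteq> B" and th: "\<theta> > 0"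
  then obtain N where N: "N \<ge> M" "N > 0" "real (card (B \<inter> {1..N})) \<le> \<theta> * real N" by blast
  have "card (A \<inter> {1..N}) \<le> card (B \<inter> {1..N})" using s by (intro card_mono) auto
  thus "\<exists>N\<ge>M. N > 0 \<and> real (card (A \<inter> {1..N})) \<le> \<theta> * real N" using N by (intro exI[of _ N]) auto
qed

lemma UD1_nonempty: "UD1 A \<Longrightarrow> \<exists>j. j \<in> A"
proof -
  assume "UD1 A"
  moreover have "(1/2::real) > 0" by simp
  ultimately obtain N where N: "N > 0" "real (card (A \<inter> {1..N})) \<ge> (1 - 1/2) * real N"
    unfolding UD1_def by blast
  hence "card (A \<inter> {1..N}) > 0" by simp
  hence "A \<inter> {1..N} \<noteq> {}" by (auto simp: card_gt_0_iff)
  thus ?thesis by blast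
qed

lemma finite_approx_infsum:
  fixes f :: "'a \<Rightarrow> real"
  assumes sf: "f summable_on UNIV" and f0: "\<And>x. f x \<ge> 0" and e: "\<eta> > 0"
  shows "\<exists>F. finite F \<and> sum f F > infsum f UNIV - \<eta>"
proof -
  have Ssup: "infsum f UNIV = (SUP F\<in>{F. finite F \<and> F \<subseteq> UNIV}. sum f F)"
    using sf f0 by (intro infsum_nonneg_is_SUPREMUM_real) auto
  have bdd: "bdd_above (sum f ` {F. finite F \<and> F \<subseteq> UNIV})"
    using sf f0 by (intro bdd_aboveI2[of _ _ "infsum f UNIV"] finite_sum_le_infsum) auto
  have "infsum f UNIV - \<eta> < (SUP F\<in>{F. finite F \<and> F \<subseteq> UNIV}. sum f F)" using e Ssup by simp
  then obtain F where "F \<in> {F. finite F \<and> F \<subseteq> UNIV}" "infsum f UNIV - \<eta> < sum f F"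
    using less_cSUP_iff[OF _ bdd] by blast
  thus ?thesis by blast
qed

context wsh begin

definition Astar :: bool where
  "Astar \<longleftrightarrow> (\<forall>R \<delta>. \<delta> > 0 \<longrightarrow> UD1 {j. \<forall>m. \<bar>m\<bar> \<le> int R \<longrightarrow> v (m + int j) < \<delta>})"

lemma DDC_crit: assumes "B0" "Astar" shows "dense_distr_chaotic (lpw p v) (lpw_dist p v) fwd_shift"
proof -
  interpret W: wsh_c p v C
    by (intro wsh_c.intro wsh_axioms wsh_c_axioms.intro assms(1)) (use assms(2) in \<open>auto simp: Astar_def\<close>)
  show ?thesis by (rule W.DDC)
qed

lemma Astar_from:
  assumes h: "\<And>\<delta>. \<delta> > 0 \<Longrightarrow> UD1 {j. v (m0 + int j) < \<delta>}"
  shows Astar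
  unfolding Astar_def
proof (intro allI impI)
  fix R :: nat and \<delta> :: real assume d: "\<delta> > 0"
  define t where "t = R + nat \<bar>m0\<bar>"
  have Cp: "C ^ (2*t) > 0" using C1 by simp
  have U: "UD1 {j. v (m0 + int j) < \<delta> / C ^ (2*t)}" using d Cp by (intro h) simp
  show "UD1 {j. \<forall>m. \<bar>m\<bar> \<le> int R \<longrightarrow> v (m + int j) < \<delta>}"
  proof (rule UD1_transfer[OF U, of 0 t])
    fix j assume j: "j \<in> {j. v (m0 + int j) < \<delta> / C ^ (2*t)}"
    show "j + t \<in> {j. \<forall>m. \<bar>m\<bar> \<le> int R \<longrightarrow> v (m + int j) < \<delta>}"
    proof (intro CollectI allI impI)
      fix m :: int assume m: "\<bar>m\<bar> \<le> int R"
      define k where "k = nat (m - m0 + int t)"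
      have k: "m + int (j + t) = (m0 + int j) + int k" unfolding k_def t_def using m by auto
      have k2: "k \<le> 2 * t" unfolding k_def t_def using m by auto
      have "v (m + int (j + t)) \<le> C ^ k * v (m0 + int j)" unfolding k by (rule v_pow)
      also have "\<dots> \<le> C ^ (2*t) * v (m0 + int j)" using C1 k2 vpos[of "m0 + int j"]
        by (intro mult_right_mono power_increasing) auto
      also have "\<dots> < C ^ (2*t) * (\<delta> / C ^ (2*t))" using j Cp by (intro mult_strict_left_mono) auto
      also have "\<dots> = \<delta>" using Cp C1 by simp
      finally show "v (m + int (j + t)) < \<delta>" .
    qed
  qed
qed

lemma lpw_diff: assumes "x \<in> lpw p v" "y \<in> lpw p v" shows "(\<lambda>m. x m - y m) \<in> lpw p v"
proof -
  have sx: "(\<lambda>n. \<bar>x n\<bar> powr p * v n) summable_on UNIV" and sy: "(\<lambda>n. \<bar>y n\<bar> powr p * v n) summable_on UNIV"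
    using assms unfolding lpw_def by auto
  have "(\<lambda>n. 3 powr p * (\<bar>x n\<bar> powr p * v n + \<bar>y n\<bar> powr p * v n)) summable_on UNIV"
    by (intro summable_on_cmult_right summable_on_add sx sy)
  hence "(\<lambda>n. \<bar>x n - y n\<bar> powr p * v n) summable_on UNIV"
  proof (rule summable_on_comparison_test)
    fix n
    have "\<bar>x n - y n\<bar> powr p \<le> 3 powr p * (\<bar>x n\<bar> powr p + \<bar>y n\<bar> powr p + \<bar>0::real\<bar> powr p)"
      by (intro pow3) auto
    hence "\<bar>x n - y n\<bar> powr p * v n \<le> 3 powr p * (\<bar>x n\<bar> powr p + \<bar>y n\<bar> powr p) * v n"
      using vpos[of n] by (intro mult_right_mono) auto
    thus "\<bar>x n - y n\<bar> powr p * v n \<le> 3 powr p * (\<bar>x n\<bar> powr p * v n + \<bar>y n\<bar> powr p * v n)"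
      by (simp add: algebra_simps)
    show "0 \<le> \<bar>x n - y n\<bar> powr p * v n" using vpos[of n] by (simp add: less_imp_le)
  qed
  thus ?thesis unfolding lpw_def by simp
qed

lemma DC_imp: assumes "distr_chaotic (lpw p v) (lpw_dist p v) fwd_shift" shows "B0 \<and> Astar"
proof -
  obtain \<Gamma> where G0: "dc_scrambled (lpw p v) (lpw_dist p v) fwd_shift \<Gamma>"
    using assms unfolding distr_chaotic_def by blast
  have G0u: "\<Gamma> \<subseteq> lpw p v \<and> uncountable \<Gamma> \<and> (\<exists>\<epsilon>>0. \<forall>\<delta>>0. \<forall>x\<in>\<Gamma>. \<forall>y\<in>\<Gamma>. x \<noteq> y \<longrightarrow>
        lower_dens {j. lpw_dist p v ((fwd_shift ^^ j) x) ((fwd_shift ^^ j) y) < \<epsilon>} = 0 \<and>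
        upper_dens {j. lpw_dist p v ((fwd_shift ^^ j) x) ((fwd_shift ^^ j) y) < \<delta>} = 1)"
    using G0 unfolding dc_scrambled_def .
  have G: "\<Gamma> \<subseteq> lpw p v" "uncountable \<Gamma>" using G0u by (rule conjunct1, rule conjunct1[OF conjunct2])
  have h3: "\<exists>\<epsilon>>0. \<forall>\<delta>>0. \<forall>x\<in>\<Gamma>. \<forall>y\<in>\<Gamma>. x \<noteq> y \<longrightarrow>
        lower_dens {j. lpw_dist p v ((fwd_shift ^^ j) x) ((fwd_shift ^^ j) y) < \<epsilon>} = 0 \<and>
        upper_dens {j. lpw_dist p v ((fwd_shift ^^ j) x) ((fwd_shift ^^ j) y) < \<delta>} = 1"
    using G0u by (rule conjunct2[OF conjunct2])
  obtain \<epsilon> where e: "\<epsilon> > 0" and scf: "\<forall>\<delta>>0. \<forall>x\<in>\<Gamma>. \<forall>y\<in>\<Gamma>. x \<noteq> y \<longrightarrow>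
        lower_dens {j. lpw_dist p v ((fwd_shift ^^ j) x) ((fwd_shift ^^ j) y) < \<epsilon>} = 0 \<and>
        upper_dens {j. lpw_dist p v ((fwd_shift ^^ j) x) ((fwd_shift ^^ j) y) < \<delta>} = 1"
    using h3 by (elim exE conjE) (rule that)
  have sc: "lower_dens {j. lpw_dist p v ((fwd_shift ^^ j) x) ((fwd_shift ^^ j) y) < \<epsilon>} = 0 \<and>
        upper_dens {j. lpw_dist p v ((fwd_shift ^^ j) x) ((fwd_shift ^^ j) y) < \<delta>} = 1"
    if "\<delta> > 0" "x \<in> \<Gamma>" "y \<in> \<Gamma>" "x \<noteq> y" for \<delta> x y
    using scf[rule_format, OF that] .
  have "infinite \<Gamma>"
  proof
    assume "finite \<Gamma>"
    hence "countable \<Gamma>" by (rule countable_finite)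
    with G(2) show False by simp
  qed
  then obtain x where x: "x \<in> \<Gamma>" using infinite_imp_nonempty by blast
  have "infinite (\<Gamma> - {x})" using \<open>infinite \<Gamma>\<close> by simp
  then obtain y where y: "y \<in> \<Gamma> - {x}" using infinite_imp_nonempty by blast
  have xy: "x \<in> \<Gamma>" "y \<in> \<Gamma>" "x \<noteq> y" using x y by auto
  define z where "z = (\<lambda>m. x m - y m)"
  have zl: "z \<in> lpw p v" unfolding z_def using G(1) xy by (intro lpw_diff) auto
  have sz: "(\<lambda>m. \<bar>z m\<bar> powr p * v (m + int j)) summable_on UNIV" for j by (rule lpw_summable_shift[OF zl])
  define e0 where "e0 = \<epsilon> powr p"
  have e0: "e0 > 0" unfolding e0_def using e by simp
  have LDz: "LD0 {j. Psi z j < e0}"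
  proof -
    have "lower_dens {j. Psi z j powr (1/p) < \<epsilon>} = 0" using sc[of 1 x y] xy unfolding dist_iter z_def by simp
    hence "LD0 {j. Psi z j powr (1/p) < \<epsilon>}" using lower_dens_LD0 by simp
    moreover have "{j. Psi z j < e0} \<subseteq> {j. Psi z j powr (1/p) < \<epsilon>}" unfolding e0_def using powr_small[OF e] by blast
    ultimately show ?thesis by (rule LD0_mono)
  qed
  have UDz: "UD1 {j. Psi z j < \<delta>}" if d: "\<delta> > 0" for \<delta>
  proof -
    have dp: "\<delta> powr (1/p) > 0" using d by simp
    have "upper_dens {j. Psi z j powr (1/p) < \<delta> powr (1/p)} = 1" using sc[OF dp xy] unfolding dist_iter z_def by simp
    hence "UD1 {j. Psi z j powr (1/p) < \<delta> powr (1/p)}" using upper_dens_UD1 by simp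
    moreover have "{j. Psi z j powr (1/p) < \<delta> powr (1/p)} \<subseteq> {j. Psi z j < \<delta>}"
    proof
      fix j assume "j \<in> {j. Psi z j powr (1/p) < \<delta> powr (1/p)}"
      hence lt: "Psi z j powr (1/p) < \<delta> powr (1/p)" by simp
      show "j \<in> {j. Psi z j < \<delta>}"
      proof (rule ccontr)
        assume "j \<notin> {j. Psi z j < \<delta>}"
        hence "\<delta> \<le> Psi z j" by simp
        hence "\<delta> powr (1/p) \<le> Psi z j powr (1/p)" using d ppos by (intro powr_mono2) auto
        with lt show False by simp
      qed
    qed
    ultimately show ?thesis by (rule UD1_mono)
  qed
  have "\<exists>m0. z m0 \<noteq> 0"
  proof (rule ccontr)
    assume "\<not> (\<exists>m0. z m0 \<noteq> 0)"
    hence "x = y" unfolding z_def by (auto intro!: ext)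
    with xy(3) show False by simp
  qed
  then obtain m0 where m0: "z m0 \<noteq> 0" by blast
  have zm0: "\<bar>z m0\<bar> powr p > 0" using m0 by simp
  have AS: Astar
  proof (rule Astar_from[of m0])
    fix \<delta> :: real assume d: "\<delta> > 0"
    have "UD1 {j. Psi z j < \<delta> * \<bar>z m0\<bar> powr p}" using d zm0 by (intro UDz) simp
    moreover have "{j. Psi z j < \<delta> * \<bar>z m0\<bar> powr p} \<subseteq> {j. v (m0 + int j) < \<delta>}"
    proof
      fix j assume "j \<in> {j. Psi z j < \<delta> * \<bar>z m0\<bar> powr p}"
      hence lt: "Psi z j < \<delta> * \<bar>z m0\<bar> powr p" by simp
      have "(\<Sum>m\<in>{m0}. \<bar>z m\<bar> powr p * v (m + int j)) \<le> Psi z j" by (rule Psi_ge[OF sz]) simp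
      hence "\<bar>z m0\<bar> powr p * v (m0 + int j) < \<bar>z m0\<bar> powr p * \<delta>" using lt by (simp add: mult.commute)
      thus "j \<in> {j. v (m0 + int j) < \<delta>}" using zm0 by simp
    qed
    ultimately show "UD1 {j. v (m0 + int j) < \<delta>}" by (rule UD1_mono)
  qed
  have BB: B0
    unfolding B0_def
  proof (intro exI[of _ "1/4"] conjI allI)
    show "(1/4::real) > 0" by simp
    fix k :: real and M :: nat
    define k1 where "k1 = max k 1"
    have k1: "k1 > 0" "k1 \<ge> k" unfolding k1_def by auto
    define \<delta> where "\<delta> = e0 / (2 * k1)"
    have dpos: "\<delta> > 0" unfolding \<delta>_def using e0 k1 by simp
    obtain j0 where j0: "Psi z j0 < \<delta>" using UD1_nonempty[OF UDz[OF dpos]] by blast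
    have q4: "(1/4::real) > 0" by simp
    obtain N' where N': "N' \<ge> M + 2 * j0 + 1" "N' > 0" "real (card ({j. Psi z j < e0} \<inter> {1..N'})) \<le> 1/4 * real N'"
      using LDz q4 unfolding LD0_def by blast
    define N where "N = N' - j0"
    have NN: "N' = j0 + N" unfolding N_def using N'(1) by simp
    have NM: "N \<ge> M" "N \<ge> 1" unfolding N_def using N'(1) by auto
    let ?P = "\<lambda>j. Psi z j \<ge> e0"
    have "{j. Psi z j < e0} \<inter> {1..N'} = {j\<in>{1..N'}. \<not> ?P j}" by auto
    hence cP': "real (card {j\<in>{1..N'}. ?P j}) \<ge> 3/4 * real N'"
      using N'(3) card_compl_interval[of N' ?P] by (simp add: algebra_simps)
    define G where "G = {i\<in>{1..N}. ?P (j0 + i)}"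
    have "card {j\<in>{1..N'}. ?P j} = card {j\<in>{1..j0}. ?P j} + card G"
      unfolding G_def NN by (rule card_interval_split)
    moreover have "card {j\<in>{1..j0}. ?P j} \<le> j0"
    proof -
      have sub: "{j\<in>{1..j0}. ?P j} \<subseteq> {1..j0}" by auto
      show ?thesis using card_mono[OF finite_atLeastAtMost sub] by simp
    qed
    ultimately have "real (card G) \<ge> 3/4 * real N' - real j0" using cP' by linarith
    moreover have "3/4 * real N' - real j0 \<ge> 1/4 * real N" using N'(1) unfolding N_def by (simp add: of_nat_diff)
    ultimately have cG: "real (card G) \<ge> 1/4 * real N" by linarith
    have fin_i: "\<exists>F. finite F \<and> (\<Sum>m\<in>F. \<bar>z m\<bar> powr p * v (m + int (j0 + i))) \<ge> e0/2" if "i \<in> G" for i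
    proof -
      obtain F where F: "finite F" "(\<Sum>m\<in>F. \<bar>z m\<bar> powr p * v (m + int (j0 + i))) > Psi z (j0 + i) - e0/2"
        using finite_approx_infsum[OF sz[of "j0 + i"] term_nonneg[of z _ "j0 + i"], of "e0/2"] e0 unfolding Psi_def by auto
      moreover have "Psi z (j0 + i) \<ge> e0" using that unfolding G_def by simp
      ultimately show ?thesis by (intro exI[of _ F]) auto
    qed
    define Fi where "Fi i = (SOME F. finite F \<and> (\<Sum>m\<in>F. \<bar>z m\<bar> powr p * v (m + int (j0 + i))) \<ge> e0/2)" for i
    have Fi: "finite (Fi i) \<and> (\<Sum>m\<in>Fi i. \<bar>z m\<bar> powr p * v (m + int (j0 + i))) \<ge> e0/2" if "i \<in> G" for i
      unfolding Fi_def using fin_i[OF that] by (rule someI_ex)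
    define F where "F = (\<Union>i\<in>G. Fi i)"
    have fG: "finite G" unfolding G_def by simp
    have fF: "finite F" unfolding F_def using fG Fi by blast
    define b where "b m = \<bar>z m\<bar> powr p" for m
    define a where "a = (\<lambda>m. (1/\<delta>) * b (m - int j0))"
    define Z where "Z = (+) (int j0) ` F"
    have Oa: "Om a Z i = (1/\<delta>) * Om b F (j0 + i)" for i unfolding a_def Z_def by (rule Om_shift)
    have b0': "\<forall>m. b m \<ge> 0" unfolding b_def by simp
    show "\<exists>a Z N. finite Z \<and> (\<forall>m. a m \<ge> 0) \<and> Om a Z 0 \<le> 1 \<and> N \<ge> M \<and> N \<ge> 1 \<and>
            real (card {j\<in>{1..N}. Om a Z j \<ge> k}) \<ge> 1/4 * real N"
    proof (intro exI[of _ a] exI[of _ Z] exI[of _ N] conjI allI)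
      show "finite Z" unfolding Z_def using fF by simp
      fix m show "a m \<ge> 0" unfolding a_def b_def using dpos by simp
    next
      have "Om b F j0 \<le> Psi z j0" unfolding Om_def b_def by (rule Psi_ge[OF sz fF])
      hence "(1/\<delta>) * Om b F j0 \<le> (1/\<delta>) * Psi z j0" using dpos by (intro mult_left_mono) auto
      also have "\<dots> < (1/\<delta>) * \<delta>" using j0 dpos by (intro mult_strict_left_mono) auto
      finally show "Om a Z 0 \<le> 1" using Oa[of 0] dpos by simp
    next
      show "N \<ge> M" "N \<ge> 1" using NM by auto
    next
      have "card G \<le> card {j\<in>{1..N}. Om a Z j \<ge> k}"
      proof (intro card_mono)
        show "G \<subseteq> {j\<in>{1..N}. Om a Z j \<ge> k}"
        proof
          fix i assume iG: "i \<in> G"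
          have "e0/2 \<le> (\<Sum>m\<in>Fi i. \<bar>z m\<bar> powr p * v (m + int (j0 + i)))" using Fi[OF iG] by simp
          also have "\<dots> \<le> Om b F (j0 + i)" unfolding Om_def b_def F_def
            using fF iG vpos by (intro sum_mono2) (auto simp: F_def less_imp_le)
          finally have "(1/\<delta>) * (e0/2) \<le> (1/\<delta>) * Om b F (j0 + i)" using dpos by (intro mult_left_mono) auto
          moreover have "(1/\<delta>) * (e0/2) = k1" unfolding \<delta>_def using e0 k1 by (simp add: divide_simps)
          ultimately have "Om a Z i \<ge> k" using Oa[of i] k1 by simp
          thus "i \<in> {j\<in>{1..N}. Om a Z j \<ge> k}" using iG unfolding G_def by simp
        qed
      qed simp
      thus "real (card {j\<in>{1..N}. Om a Z j \<ge> k}) \<ge> 1/4 * real N" using cG by linarith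
    qed
  qed
  show ?thesis using AS BB by simp
qed

lemma P2_imp:
  fixes S :: "nat \<Rightarrow> int set"
  assumes S: "\<forall>k\<ge>1. finite (S k) \<and> S k \<noteq> {}"
    and Ai: "\<exists>A :: nat set. upper_dens A = 1 \<and> ((\<lambda>n. v (int n)) \<longlongrightarrow> 0) (inf sequentially (principal A))"
    and Bi: "\<exists>\<epsilon>>0. \<exists>N :: nat \<Rightarrow> nat. strict_mono N \<and>
               (\<forall>k\<ge>1. real (card {n \<in> {1..N k}.
                   (\<Sum>j\<in>S k. v (int n + j)) / (\<Sum>j\<in>S k. v j) \<ge> real k})
                 \<ge> real (N k) * \<epsilon>)"
  shows "B0 \<and> Astar"
proof
  obtain A where A: "upper_dens A = 1" "((\<lambda>n. v (int n)) \<longlongrightarrow> 0) (inf sequentially (principal A))" using Ai by blast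
  show Astar
  proof (rule Astar_from[of 0])
    fix \<delta> :: real assume d: "\<delta> > 0"
    have "eventually (\<lambda>n. v (int n) < \<delta>) (inf sequentially (principal A))"
      using order_tendstoD(2)[OF A(2) d] .
    then obtain n0 where n0: "\<And>n. n \<ge> n0 \<Longrightarrow> n \<in> A \<Longrightarrow> v (int n) < \<delta>"
      unfolding eventually_inf_principal eventually_sequentially by blast
    show "UD1 {j. v (0 + int j) < \<delta>}"
      by (rule UD1_transfer[of A n0 0]) (use A(1) upper_dens_UD1 n0 in auto)
  qed
  obtain \<epsilon> N where eN: "\<epsilon> > 0" "strict_mono N"
    "\<forall>k\<ge>1. real (card {n \<in> {1..N k}. (\<Sum>j\<in>S k. v (int n + j)) / (\<Sum>j\<in>S k. v j) \<ge> real k}) \<ge> real (N k) * \<epsilon>"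
    using Bi by blast
  show B0 unfolding B0_def
  proof (intro exI[of _ \<epsilon>] conjI allI)
    show "\<epsilon> > 0" by (rule eN(1))
    fix k :: real and M :: nat
    define k' where "k' = max (nat \<lceil>k\<rceil>) (max M 1)"
    have k'1: "k' \<ge> 1" "k' \<ge> M" "real k' \<ge> k" unfolding k'_def by linarith+
    have SF: "finite (S k')" "S k' \<noteq> {}" using S k'1 by auto
    define sv where "sv = (\<Sum>j\<in>S k'. v j)"
    have svp: "sv > 0" unfolding sv_def using SF vpos by (intro sum_pos) auto
    define a where "a = (\<lambda>m::int. 1 / sv)"
    have Oa: "Om a (S k') n = (\<Sum>j\<in>S k'. v (int n + j)) / sv" for n
      unfolding Om_def a_def by (simp add: sum_divide_distrib add.commute)
    have Nk: "N k' \<ge> k'" using strict_mono_imp_increasing[OF eN(2)] by simp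
    show "\<exists>a Z Na. finite Z \<and> (\<forall>m. a m \<ge> 0) \<and> Om a Z 0 \<le> 1 \<and> Na \<ge> M \<and> Na \<ge> 1 \<and>
            real (card {j\<in>{1..Na}. Om a Z j \<ge> k}) \<ge> \<epsilon> * real Na"
    proof (intro exI[of _ a] exI[of _ "S k'"] exI[of _ "N k'"] conjI allI)
      show "finite (S k')" by (rule SF(1))
      fix m show "a m \<ge> 0" unfolding a_def using svp by simp
    next
      show "Om a (S k') 0 \<le> 1" using Oa[of 0] svp unfolding sv_def by simp
      show "N k' \<ge> M" "N k' \<ge> 1" using Nk k'1 by auto
      have "card {n \<in> {1..N k'}. (\<Sum>j\<in>S k'. v (int n + j)) / (\<Sum>j\<in>S k'. v j) \<ge> real k'}
          \<le> card {j\<in>{1..N k'}. Om a (S k') j \<ge> k}"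
        by (rule card_mono_interval) (use Oa k'1 in \<open>auto simp: sv_def\<close>)
      moreover have "real (card {n \<in> {1..N k'}. (\<Sum>j\<in>S k'. v (int n + j)) / (\<Sum>j\<in>S k'. v j) \<ge> real k'}) \<ge> real (N k') * \<epsilon>"
        using eN(3) k'1 by simp
      ultimately show "real (card {j\<in>{1..N k'}. Om a (S k') j \<ge> k}) \<ge> \<epsilon> * real (N k')" by (simp add: mult.commute)
    qed
  qed
qed

end

theorem mainTheorem14:
  fixes p :: real and v :: "int \<Rightarrow> real"
  assumes p: "1 \<le> p"
    and vpos: "\<And>n. v n > 0"
    and vbdd: "bdd_above (range (\<lambda>n. v (n + 1) / v n))"
  shows "(distr_chaotic (lpw p v) (lpw_dist p v) fwd_shift \<longleftrightarrow>
          dense_distr_chaotic (lpw p v) (lpw_dist p v) fwd_shift)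
       \<and> (\<forall>S :: nat \<Rightarrow> int set.
           (\<forall>k\<ge>1. finite (S k) \<and> S k \<noteq> {}) \<and>
           (\<exists>A :: nat set. upper_dens A = 1 \<and>
               ((\<lambda>n. v (int n)) \<longlongrightarrow> 0) (inf sequentially (principal A))) \<and>
           (\<exists>\<epsilon>>0. \<exists>N :: nat \<Rightarrow> nat. strict_mono N \<and>
               (\<forall>k\<ge>1. real (card {n \<in> {1..N k}.
                   (\<Sum>j\<in>S k. v (int n + j)) / (\<Sum>j\<in>S k. v j) \<ge> real k})
                 \<ge> real (N k) * \<epsilon>))
           \<longrightarrow> distr_chaotic (lpw p v) (lpw_dist p v) fwd_shift
             \<and> dense_distr_chaotic (lpw p v) (lpw_dist p v) fwd_shift)"
proof -
  obtain S0 where S0: "\<And>n. v (n + 1) / v n \<le> S0" using vbdd unfolding bdd_above_def by auto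
  define C where "C = max 1 S0"
  interpret W: wsh p v C
  proof
    show "1 \<le> p" by (rule p)
    show "\<And>n. v n > 0" by (rule vpos)
    show "C \<ge> 1" unfolding C_def by simp
    fix n
    have "v (n + 1) / v n \<le> C" using S0[of n] unfolding C_def by simp
    thus "v (n + 1) \<le> C * v n" using vpos[of n] by (simp add: divide_simps)
  qed
  have DD: "distr_chaotic (lpw p v) (lpw_dist p v) fwd_shift" if "dense_distr_chaotic (lpw p v) (lpw_dist p v) fwd_shift"
    using that unfolding distr_chaotic_def dense_distr_chaotic_def by blast
  show ?thesis
  proof (intro conjI allI impI iffI)
    assume "distr_chaotic (lpw p v) (lpw_dist p v) fwd_shift"
    hence "W.B0 \<and> W.Astar" by (rule W.DC_imp)
    thus "dense_distr_chaotic (lpw p v) (lpw_dist p v) fwd_shift" using W.DDC_crit by blast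
  next
    assume "dense_distr_chaotic (lpw p v) (lpw_dist p v) fwd_shift"
    thus "distr_chaotic (lpw p v) (lpw_dist p v) fwd_shift" by (rule DD)
  next
    fix S :: "nat \<Rightarrow> int set"
    assume h: "(\<forall>k\<ge>1. finite (S k) \<and> S k \<noteq> {}) \<and>
           (\<exists>A :: nat set. upper_dens A = 1 \<and>
               ((\<lambda>n. v (int n)) \<longlongrightarrow> 0) (inf sequentially (principal A))) \<and>
           (\<exists>\<epsilon>>0. \<exists>N :: nat \<Rightarrow> nat. strict_mono N \<and>
               (\<forall>k\<ge>1. real (card {n \<in> {1..N k}.
                   (\<Sum>j\<in>S k. v (int n + j)) / (\<Sum>j\<in>S k. v j) \<ge> real k})
                 \<ge> real (N k) * \<epsilon>))"
    have "W.B0 \<and> W.Astar" using W.P2_imp[of S] h by blast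
    hence dd: "dense_distr_chaotic (lpw p v) (lpw_dist p v) fwd_shift" using W.DDC_crit by blast
    thus "dense_distr_chaotic (lpw p v) (lpw_dist p v) fwd_shift" .
    show "distr_chaotic (lpw p v) (lpw_dist p v) fwd_shift" using DD[OF dd] .
  qed
qed

end
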